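(* Let a General Utility Markov Game (see context) satisfy (A1) for every $i$ and every $\pi_{-i}\in\Pi_{-i}$, $(\lambda_1,\dots,\lambda_N)\mapsto F_i(\lambda_1,\dots,\lambda_N,\pi_{-i})$ is jointly concave, and (A2) $d_\mu^\pi(s)>0$ for all $\pi\in\Pi$, $s\in\mathcal S$. Define the pseudo-gradient $v(\pi)=(v_i(\pi))_{i\in\mathcal N}$, $v_i(\pi)=\nabla_{\pi_i}u_{\mu,i}(\pi)$. Then a joint policy $\pi^\star\in\Pi$ is a Nash equilibrium if and only if $\langle v(\pi^\star),\pi-\pi^\star\rangle\le0$ for all $\pi\in\Pi$. Moreover, for any $\varepsilon>0$, if $\langle v(\pi^\star),\pi-\pi^\star\rangle\le\varepsilon$ for all $\pi\in\Pi$, then $\pi^\star$ is a $(C_{\mathcal G}\varepsilon)$-approximate Nash equilibrium, where $$C_{\mathcal G}:=\max_{i\in\mathcal N}\max_{\pi\in\Pi}\min_{\pi_i^\star\in\Pi_i^\star(\pi_{-i})}\Big\|\frac{d_\mu^{\pi_i^\star,\pi_{-i}}}{d_\mu^{\pi_i,\pi_{-i}}}\Big\|_\infty$$ and $\Pi_i^\star(\pi_{-i})$ is the set of maximizers of $\pi_i'\mapsto u_{\mu,i}(\pi_i',\pi_{-i})$ over $\Pi_i$.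
   Context: A GUMG consists of: agents $\mathcal N=\{1,\dots,N\}$; finite state space $\mathcal S$; finite action sets $\mathcal A_i$, joint $\mathcal A=\prod_i\mathcal A_i$; transition kernel $P:\mathcal S\times\mathcal A\to\Delta(\mathcal S)$; initial distribution $\mu\in\Delta(\mathcal S)$; discount $\gamma\in(0,1)$; and differentiable $F_i:\Lambda\times\Pi_{-i}\to\mathbb R$, $\Lambda=\prod_i\Delta(\mathcal S\times\mathcal A_i)$. Policies: $\Pi_i=\Delta(\mathcal A_i)^{\mathcal S}$ as vectors $(\pi_i(a_i|s))_{s,a_i}$; $\Pi=\prod_i\Pi_i$, $\Pi_{-i}=\prod_{j\neq i}\Pi_j$; joint action probabilities $\pi(a|s)=\prod_i\pi_i(a_i|s)$. With $\mathbb P_{\rho,\pi}$ the law of the induced chain started from $s_0\sim\rho$: $d_\rho^\pi(s)=(1-\gamma)\sum_t\gamma^t\mathbb P_{\rho,\pi}(s_t=s)$, $\lambda_{\rho,i}^\pi(s,a_i)=(1-\gamma)\sum_t\gamma^t\mathbb P_{\rho,\pi}(s_t=s,a_{i,t}=a_i)$. Utilities $u_{\mu,i}(\pi)=F_i(\lambda_{\mu,1}^\pi,\dots,\lambda_{\mu,N}^\pi,\pi_{-i})$; $\nabla_{\pi_i}$ is the gradient w.r.t. the coordinates $\pi_i(a_i|s)$. For $\varepsilon\ge0$, $\pi^\star$ is an $\varepsilon$-approximate Nash equilibrium if $u_{\mu,i}(\pi_i',\pi^\star_{-i})-u_{\mu,i}(\pi^\star)\le\varepsilon$ for all $i$ and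 all $\pi_i'\in\Pi_i$; a Nash equilibrium is the case $\varepsilon=0$. *)

theory Defs
  imports "HOL-Analysis.Analysis"
begin

text \<open>Actions of agent i: nonempty subset A i of the finite type 'a.  A policy of agent i is a
  function p :: 's => 'a => real with p s a = pi_i(a|s); it vanishes outside A i.
  Joint policies are functions 'i => 's => 'a => real; joint actions are elements of PiE UNIV A.\<close>

definition policy_set :: "('i \<Rightarrow> 'a set) \<Rightarrow> 'i \<Rightarrow> ('s::finite \<Rightarrow> 'a \<Rightarrow> real) set" where
  "policy_set A i = {p. \<forall>s. (\<forall>a\<in>A i. 0 \<le> p s a) \<and> (\<forall>a. a \<notin> A i \<longrightarrow> p s a = 0)
                          \<and> sum (p s) (A i) = 1}"

definition joint_policies :: "('i \<Rightarrow> 'a set) \<Rightarrow> ('i \<Rightarrow> 's::finite \<Rightarrow> 'a \<Rightarrow> real) set" where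
  "joint_policies A = {\<pi>. \<forall>i. \<pi> i \<in> policy_set A i}"

definition joint_actions :: "('i \<Rightarrow> 'a set) \<Rightarrow> ('i \<Rightarrow> 'a) set" where
  "joint_actions A = PiE UNIV A"

definition joint_prob :: "('i::finite \<Rightarrow> 's \<Rightarrow> 'a \<Rightarrow> real) \<Rightarrow> 's \<Rightarrow> ('i \<Rightarrow> 'a) \<Rightarrow> real" where
  "joint_prob \<pi> s a = (\<Prod>i\<in>UNIV. \<pi> i s (a i))"

primrec state_dist ::
  "('i::finite \<Rightarrow> 'a set) \<Rightarrow> ('s::finite \<Rightarrow> ('i \<Rightarrow> 'a) \<Rightarrow> 's \<Rightarrow> real) \<Rightarrow> ('s \<Rightarrow> real)
   \<Rightarrow> ('i \<Rightarrow> 's \<Rightarrow> 'a \<Rightarrow> real) \<Rightarrow> nat \<Rightarrow> 's \<Rightarrow> real" where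
  "state_dist A P \<rho> \<pi> 0 = \<rho>"
| "state_dist A P \<rho> \<pi> (Suc t) = (\<lambda>s'. \<Sum>s\<in>UNIV. \<Sum>a\<in>joint_actions A.
       state_dist A P \<rho> \<pi> t s * joint_prob \<pi> s a * P s a s')"

definition occ_state ::
  "('i::finite \<Rightarrow> 'a set) \<Rightarrow> ('s::finite \<Rightarrow> ('i \<Rightarrow> 'a) \<Rightarrow> 's \<Rightarrow> real) \<Rightarrow> real \<Rightarrow> ('s \<Rightarrow> real)
   \<Rightarrow> ('i \<Rightarrow> 's \<Rightarrow> 'a \<Rightarrow> real) \<Rightarrow> 's \<Rightarrow> real" where
  "occ_state A P \<gamma> \<rho> \<pi> s = (1 - \<gamma>) * (\<Sum>t. \<gamma> ^ t * state_dist A P \<rho> \<pi> t s)"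

text \<open>Agent occupancy lambda_{rho,i}^pi(s,a_i); P(s_t = s, a_{i,t} = a_i) = P(s_t = s) * pi_i(a_i|s).\<close>
definition occ_agent ::
  "('i::finite \<Rightarrow> 'a set) \<Rightarrow> ('s::finite \<Rightarrow> ('i \<Rightarrow> 'a) \<Rightarrow> 's \<Rightarrow> real) \<Rightarrow> real \<Rightarrow> ('s \<Rightarrow> real)
   \<Rightarrow> ('i \<Rightarrow> 's \<Rightarrow> 'a \<Rightarrow> real) \<Rightarrow> 'i \<Rightarrow> 's \<Rightarrow> 'a \<Rightarrow> real" where
  "occ_agent A P \<gamma> \<rho> \<pi> i s a = (1 - \<gamma>) * (\<Sum>t. \<gamma> ^ t * (state_dist A P \<rho> \<pi> t s * \<pi> i s a))"

definition occ_vec ::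
  "('i::finite \<Rightarrow> 'a::finite set) \<Rightarrow> ('s::finite \<Rightarrow> ('i \<Rightarrow> 'a) \<Rightarrow> 's \<Rightarrow> real) \<Rightarrow> real \<Rightarrow> ('s \<Rightarrow> real)
   \<Rightarrow> ('i \<Rightarrow> 's \<Rightarrow> 'a \<Rightarrow> real) \<Rightarrow> real ^ ('i \<times> 's \<times> 'a)" where
  "occ_vec A P \<gamma> \<rho> \<pi> = (\<chi> x. case x of (i, s, a) \<Rightarrow> occ_agent A P \<gamma> \<rho> \<pi> i s a)"

definition lam_set :: "('i::finite \<Rightarrow> 'a::finite set) \<Rightarrow> (real ^ ('i \<times> 's::finite \<times> 'a)) set" where
  "lam_set A = {l. \<forall>i. (\<forall>s a. a \<in> A i \<longrightarrow> 0 \<le> l $ (i, s, a))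
                   \<and> (\<forall>s a. a \<notin> A i \<longrightarrow> l $ (i, s, a) = 0)
                   \<and> (\<Sum>s\<in>UNIV. \<Sum>a\<in>A i. l $ (i, s, a)) = 1}"

text \<open>pi_{-i}: the joint policy with the i-th component erased (set to 0).\<close>
definition minus_vec ::
  "('i::finite \<Rightarrow> 's::finite \<Rightarrow> 'a::finite \<Rightarrow> real) \<Rightarrow> 'i \<Rightarrow> real ^ ('i \<times> 's \<times> 'a)" where
  "minus_vec \<pi> i = (\<chi> x. case x of (j, s, a) \<Rightarrow> if j = i then 0 else \<pi> j s a)"

definition utility ::
  "('i::finite \<Rightarrow> 'a::finite set) \<Rightarrow> ('s::finite \<Rightarrow> ('i \<Rightarrow> 'a) \<Rightarrow> 's \<Rightarrow> real) \<Rightarrow> real \<Rightarrow> ('s \<Rightarrow> real)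
   \<Rightarrow> ('i \<Rightarrow> ((real ^ ('i \<times> 's \<times> 'a)) \<times> (real ^ ('i \<times> 's \<times> 'a))) \<Rightarrow> real)
   \<Rightarrow> 'i \<Rightarrow> ('i \<Rightarrow> 's \<Rightarrow> 'a \<Rightarrow> real) \<Rightarrow> real" where
  "utility A P \<gamma> \<mu> F i \<pi> = F i (occ_vec A P \<gamma> \<mu> \<pi>, minus_vec \<pi> i)"

definition pseudo_grad ::
  "('i::finite \<Rightarrow> 'a::finite set) \<Rightarrow> ('s::finite \<Rightarrow> ('i \<Rightarrow> 'a) \<Rightarrow> 's \<Rightarrow> real) \<Rightarrow> real \<Rightarrow> ('s \<Rightarrow> real)
   \<Rightarrow> ('i \<Rightarrow> ((real ^ ('i \<times> 's \<times> 'a)) \<times> (real ^ ('i \<times> 's \<times> 'a))) \<Rightarrow> real)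
   \<Rightarrow> ('i \<Rightarrow> 's \<Rightarrow> 'a \<Rightarrow> real) \<Rightarrow> 'i \<Rightarrow> 's \<Rightarrow> 'a \<Rightarrow> real" where
  "pseudo_grad A P \<gamma> \<mu> F \<pi> i s a =
     deriv (\<lambda>t. utility A P \<gamma> \<mu> F i (\<pi>(i := (\<pi> i)(s := (\<pi> i s)(a := \<pi> i s a + t))))) 0"

definition grad_pairing ::
  "('i::finite \<Rightarrow> 'a::finite set) \<Rightarrow> ('s::finite \<Rightarrow> ('i \<Rightarrow> 'a) \<Rightarrow> 's \<Rightarrow> real) \<Rightarrow> real \<Rightarrow> ('s \<Rightarrow> real)
   \<Rightarrow> ('i \<Rightarrow> ((real ^ ('i \<times> 's \<times> 'a)) \<times> (real ^ ('i \<times> 's \<times> 'a))) \<Rightarrow> real)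
   \<Rightarrow> ('i \<Rightarrow> 's \<Rightarrow> 'a \<Rightarrow> real) \<Rightarrow> ('i \<Rightarrow> 's \<Rightarrow> 'a \<Rightarrow> real) \<Rightarrow> real" where
  "grad_pairing A P \<gamma> \<mu> F \<pi>0 \<pi> =
     (\<Sum>i\<in>UNIV. \<Sum>s\<in>UNIV. \<Sum>a\<in>A i. pseudo_grad A P \<gamma> \<mu> F \<pi>0 i s a * (\<pi> i s a - \<pi>0 i s a))"

definition approx_nash ::
  "('i::finite \<Rightarrow> 'a::finite set) \<Rightarrow> ('s::finite \<Rightarrow> ('i \<Rightarrow> 'a) \<Rightarrow> 's \<Rightarrow> real) \<Rightarrow> real \<Rightarrow> ('s \<Rightarrow> real)
   \<Rightarrow> ('i \<Rightarrow> ((real ^ ('i \<times> 's \<times> 'a)) \<times> (real ^ ('i \<times> 's \<times> 'a))) \<Rightarrow> real)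
   \<Rightarrow> real \<Rightarrow> ('i \<Rightarrow> 's \<Rightarrow> 'a \<Rightarrow> real) \<Rightarrow> bool" where
  "approx_nash A P \<gamma> \<mu> F \<epsilon> \<pi> \<longleftrightarrow>
     (\<forall>i. \<forall>p\<in>policy_set A i. utility A P \<gamma> \<mu> F i (\<pi>(i := p)) - utility A P \<gamma> \<mu> F i \<pi> \<le> \<epsilon>)"

definition nash ::
  "('i::finite \<Rightarrow> 'a::finite set) \<Rightarrow> ('s::finite \<Rightarrow> ('i \<Rightarrow> 'a) \<Rightarrow> 's \<Rightarrow> real) \<Rightarrow> real \<Rightarrow> ('s \<Rightarrow> real)
   \<Rightarrow> ('i \<Rightarrow> ((real ^ ('i \<times> 's \<times> 'a)) \<times> (real ^ ('i \<times> 's \<times> 'a))) \<Rightarrow> real)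
   \<Rightarrow> ('i \<Rightarrow> 's \<Rightarrow> 'a \<Rightarrow> real) \<Rightarrow> bool" where
  "nash A P \<gamma> \<mu> F \<pi> \<longleftrightarrow> approx_nash A P \<gamma> \<mu> F 0 \<pi>"

definition best_responses ::
  "('i::finite \<Rightarrow> 'a::finite set) \<Rightarrow> ('s::finite \<Rightarrow> ('i \<Rightarrow> 'a) \<Rightarrow> 's \<Rightarrow> real) \<Rightarrow> real \<Rightarrow> ('s \<Rightarrow> real)
   \<Rightarrow> ('i \<Rightarrow> ((real ^ ('i \<times> 's \<times> 'a)) \<times> (real ^ ('i \<times> 's \<times> 'a))) \<Rightarrow> real)
   \<Rightarrow> 'i \<Rightarrow> ('i \<Rightarrow> 's \<Rightarrow> 'a \<Rightarrow> real) \<Rightarrow> ('s \<Rightarrow> 'a \<Rightarrow> real) set" where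
  "best_responses A P \<gamma> \<mu> F i \<pi> =
     {p \<in> policy_set A i. \<forall>p'\<in>policy_set A i.
        utility A P \<gamma> \<mu> F i (\<pi>(i := p')) \<le> utility A P \<gamma> \<mu> F i (\<pi>(i := p))}"

definition C_G ::
  "('i::finite \<Rightarrow> 'a::finite set) \<Rightarrow> ('s::finite \<Rightarrow> ('i \<Rightarrow> 'a) \<Rightarrow> 's \<Rightarrow> real) \<Rightarrow> real \<Rightarrow> ('s \<Rightarrow> real)
   \<Rightarrow> ('i \<Rightarrow> ((real ^ ('i \<times> 's \<times> 'a)) \<times> (real ^ ('i \<times> 's \<times> 'a))) \<Rightarrow> real) \<Rightarrow> real" where
  "C_G A P \<gamma> \<mu> F =
     (MAX i\<in>UNIV. SUP \<pi>\<in>joint_policies A. INF p\<in>best_responses A P \<gamma> \<mu> F i \<pi>.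
        (MAX s\<in>UNIV. occ_state A P \<gamma> \<mu> (\<pi>(i := p)) s / occ_state A P \<gamma> \<mu> \<pi> s))"

end

theory Submission
  imports Defs
begin


definition rowmul :: "('s::finite \<Rightarrow> real) \<Rightarrow> ('s \<Rightarrow> 's \<Rightarrow> real) \<Rightarrow> 's \<Rightarrow> real" where
  "rowmul x M = (\<lambda>s'. \<Sum>s\<in>UNIV. x s * M s s')"
definition n1 :: "('s::finite \<Rightarrow> real) \<Rightarrow> real" where
  "n1 x = (\<Sum>s\<in>UNIV. \<bar>x s\<bar>)"
primrec itr :: "('s::finite \<Rightarrow> real) \<Rightarrow> ('s \<Rightarrow> 's \<Rightarrow> real) \<Rightarrow> nat \<Rightarrow> 's \<Rightarrow> real" where
  "itr x M 0 = x"
| "itr x M (Suc n) = rowmul (itr x M n) M"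
definition rsol :: "real \<Rightarrow> ('s::finite \<Rightarrow> real) \<Rightarrow> ('s \<Rightarrow> 's \<Rightarrow> real) \<Rightarrow> 's \<Rightarrow> real" where
  "rsol g x M = (\<lambda>s. \<Sum>n. g ^ n * itr x M n s)"
definition rowbd :: "('s::finite \<Rightarrow> 's \<Rightarrow> real) \<Rightarrow> real \<Rightarrow> bool" where
  "rowbd M K \<longleftrightarrow> (\<forall>s. (\<Sum>s'\<in>UNIV. \<bar>M s s'\<bar>) \<le> K)"

lemma n1_nonneg: "0 \<le> n1 x" unfolding n1_def by (simp add: sum_nonneg)

lemma abs_le_n1: "\<bar>x s\<bar> \<le> n1 x"
  unfolding n1_def by (rule member_le_sum) auto

lemma n1_add: "n1 (\<lambda>s. x s + y s) \<le> n1 x + n1 y"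
  unfolding n1_def by (simp add: sum.distrib[symmetric] sum_mono abs_triangle_ineq)

lemma n1_scale: "n1 (\<lambda>s. c * x s) = \<bar>c\<bar> * n1 x"
  unfolding n1_def by (simp add: abs_mult sum_distrib_left)

lemma n1_zero: "n1 x = 0 \<Longrightarrow> x = (\<lambda>s. 0)"
  unfolding n1_def by (rule ext) (simp add: sum_nonneg_eq_0_iff)

lemma n1_rowmul:
  assumes "rowbd M K"
  shows "n1 (rowmul x M) \<le> K * n1 x"
proof -
  have "n1 (rowmul x M) = (\<Sum>s'\<in>UNIV. \<bar>\<Sum>s\<in>UNIV. x s * M s s'\<bar>)"
    unfolding n1_def rowmul_def by simp
  also have "\<dots> \<le> (\<Sum>s'\<in>UNIV. \<Sum>s\<in>UNIV. \<bar>x s\<bar> * \<bar>M s s'\<bar>)"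
    by (intro sum_mono) (metis (no_types, lifting) abs_mult sum.cong sum_abs)
  also have "\<dots> = (\<Sum>s\<in>UNIV. \<bar>x s\<bar> * (\<Sum>s'\<in>UNIV. \<bar>M s s'\<bar>))"
    by (subst sum.swap) (simp add: sum_distrib_left)
  also have "\<dots> \<le> (\<Sum>s\<in>UNIV. \<bar>x s\<bar> * K)"
    using assms unfolding rowbd_def by (intro sum_mono mult_left_mono) auto
  also have "\<dots> = K * n1 x" unfolding n1_def by (simp add: sum_distrib_left mult.commute)
  finally show ?thesis .
qed

lemma n1_itr:
  assumes "rowbd M K" "0 \<le> K"
  shows "n1 (itr x M n) \<le> K ^ n * n1 x"
proof (induction n)
  case 0 then show ?case by simp
next
  case (Suc n)
  have "n1 (itr x M (Suc n)) \<le> K * n1 (itr x M n)"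
    using n1_rowmul[OF assms(1)] by simp
  also have "\<dots> \<le> K * (K ^ n * n1 x)" using Suc assms(2) by (simp add: mult_left_mono)
  finally show ?case by simp
qed

lemma itr_summable:
  assumes "rowbd M K" "0 \<le> K" "0 \<le> g" "g * K < 1"
  shows "summable (\<lambda>n. g ^ n * itr x M n s)"
proof (rule summable_comparison_test)
  show "\<exists>N. \<forall>n\<ge>N. norm (g ^ n * itr x M n s) \<le> n1 x * (g * K) ^ n"
  proof (intro exI allI impI)
    fix n :: nat
    have "norm (g ^ n * itr x M n s) = g ^ n * \<bar>itr x M n s\<bar>"
      using assms(3) by (simp add: abs_mult)
    also have "\<dots> \<le> g ^ n * (K ^ n * n1 x)"
      using abs_le_n1[of "itr x M n" s] n1_itr[OF assms(1,2), of x n] assms(3)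
      by (intro mult_left_mono) auto
    also have "\<dots> = n1 x * (g * K) ^ n" by (simp add: power_mult_distrib)
    finally show "norm (g ^ n * itr x M n s) \<le> n1 x * (g * K) ^ n" .
  qed
  show "summable (\<lambda>n. n1 x * (g * K) ^ n)"
    using assms by (intro summable_mult summable_geometric) (simp add: mult_nonneg_nonneg)
qed

lemma rsol_eq:
  assumes "rowbd M K" "0 \<le> K" "0 \<le> g" "g * K < 1"
  shows "rsol g x M s' = x s' + g * rowmul (rsol g x M) M s'"
proof -
  let ?f = "\<lambda>n. g ^ n * itr x M n s'"
  have sf: "summable ?f" by (rule itr_summable[OF assms])
  have "(\<Sum>n. ?f (Suc n)) = suminf ?f - ?f 0" by (rule suminf_split_head[OF sf])
  hence "rsol g x M s' = x s' + (\<Sum>n. ?f (Suc n))" unfolding rsol_def by simp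
  also have "(\<Sum>n. ?f (Suc n)) = (\<Sum>n. g * (\<Sum>s\<in>UNIV. (g ^ n * itr x M n s) * M s s'))"
    by (simp add: rowmul_def sum_distrib_left mult_ac)
  also have "\<dots> = g * (\<Sum>n. \<Sum>s\<in>UNIV. (g ^ n * itr x M n s) * M s s')"
    by (rule suminf_mult) (intro summable_sum summable_mult2 itr_summable[OF assms])
  also have "(\<Sum>n. \<Sum>s\<in>UNIV. (g ^ n * itr x M n s) * M s s') = (\<Sum>s\<in>UNIV. \<Sum>n. (g ^ n * itr x M n s) * M s s')"
    by (rule suminf_sum) (intro summable_mult2 itr_summable[OF assms])
  also have "\<dots> = (\<Sum>s\<in>UNIV. rsol g x M s * M s s')"
    unfolding rsol_def by (intro sum.cong refl suminf_mult2[symmetric] itr_summable[OF assms])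
  finally show ?thesis unfolding rowmul_def by simp
qed

lemma rowmul_lin: "rowmul (\<lambda>s. a * x s + b * y s) M s' = a * rowmul x M s' + b * rowmul y M s'"
  unfolding rowmul_def by (simp add: algebra_simps sum.distrib sum_distrib_left)

lemma uniq_bound:
  assumes "rowbd M K" "0 \<le> K" "0 \<le> g" "g * K < 1"
    and "\<And>s'. y s' = z s' + g * rowmul y M s'"
  shows "n1 y \<le> n1 z / (1 - g * K)"
proof -
  have "y = (\<lambda>s'. z s' + g * rowmul y M s')" using assms(5) by auto
  hence "n1 y \<le> n1 z + n1 (\<lambda>s'. g * rowmul y M s')" using n1_add by metis
  also have "n1 (\<lambda>s'. g * rowmul y M s') = g * n1 (rowmul y M)" using n1_scale[of g "rowmul y M"] assms(3) by simp
  also have "\<dots> \<le> g * (K * n1 y)" using n1_rowmul[OF assms(1)] assms(3) by (simp add: mult_left_mono)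
  finally have "(1 - g * K) * n1 y \<le> n1 z" by (simp add: algebra_simps)
  thus ?thesis using assms(4) by (simp add: field_simps)
qed

lemma rowmul_diff: "rowmul (\<lambda>s. y s - z s) M s' = rowmul y M s' - rowmul z M s'"
  unfolding rowmul_def by (simp add: algebra_simps sum_subtractf)

lemma rsol_unique:
  assumes "rowbd M K" "0 \<le> K" "0 \<le> g" "g * K < 1"
    and "\<And>s'. y s' = x s' + g * rowmul y M s'"
  shows "y = rsol g x M"
proof -
  let ?d = "\<lambda>s. y s - rsol g x M s"
  have "\<And>s'. ?d s' = (\<lambda>s. 0) s' + g * rowmul ?d M s'"
  proof -
    fix s'
    have e1: "y s' = x s' + g * rowmul y M s'" by (rule assms(5))
    have e2: "rsol g x M s' = x s' + g * rowmul (rsol g x M) M s'" by (rule rsol_eq[OF assms(1-4)])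
    show "?d s' = (\<lambda>s. 0) s' + g * rowmul ?d M s'"
      unfolding rowmul_diff by (subst e1, subst e2) (simp add: algebra_simps)
  qed
  from uniq_bound[OF assms(1-4) this] have "n1 ?d \<le> 0" by (simp add: n1_def)
  hence "?d = (\<lambda>s. 0)" using n1_nonneg[of ?d] n1_zero[of ?d] by linarith
  thus ?thesis by (auto simp: fun_eq_iff dest: fun_cong)
qed

definition colmul :: "('s::finite \<Rightarrow> 's \<Rightarrow> real) \<Rightarrow> ('s \<Rightarrow> real) \<Rightarrow> 's \<Rightarrow> real" where
  "colmul M v = (\<lambda>s. \<Sum>s'\<in>UNIV. M s s' * v s')"
primrec itc :: "('s::finite \<Rightarrow> real) \<Rightarrow> ('s \<Rightarrow> 's \<Rightarrow> real) \<Rightarrow> nat \<Rightarrow> 's \<Rightarrow> real" where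
  "itc v M 0 = v"
| "itc v M (Suc n) = colmul M (itc v M n)"
definition csol :: "real \<Rightarrow> ('s::finite \<Rightarrow> real) \<Rightarrow> ('s \<Rightarrow> 's \<Rightarrow> real) \<Rightarrow> 's \<Rightarrow> real" where
  "csol g v M = (\<lambda>s. \<Sum>n. g ^ n * itc v M n s)"

lemma itc_bound:
  assumes "rowbd M 1"
  shows "\<bar>itc v M n s\<bar> \<le> n1 v"
proof (induction n arbitrary: s)
  case 0 then show ?case by (simp add: abs_le_n1)
next
  case (Suc n)
  have "\<bar>itc v M (Suc n) s\<bar> = \<bar>\<Sum>s'\<in>UNIV. M s s' * itc v M n s'\<bar>" by (simp add: colmul_def)
  also have "\<dots> \<le> (\<Sum>s'\<in>UNIV. \<bar>M s s'\<bar> * n1 v)"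
    by (rule order_trans[OF sum_abs]) (intro sum_mono, simp add: abs_mult mult_left_mono Suc)
  also have "\<dots> = (\<Sum>s'\<in>UNIV. \<bar>M s s'\<bar>) * n1 v" by (simp add: sum_distrib_right)
  also have "\<dots> \<le> 1 * n1 v" using assms unfolding rowbd_def
    by (intro mult_right_mono n1_nonneg) auto
  finally show ?case by simp
qed

lemma itc_summable:
  assumes "rowbd M 1" "0 \<le> g" "g < 1"
  shows "summable (\<lambda>n. g ^ n * itc v M n s)"
proof (rule summable_comparison_test)
  show "\<exists>N. \<forall>n\<ge>N. norm (g ^ n * itc v M n s) \<le> n1 v * g ^ n"
  proof (intro exI[of _ 0] allI impI)
    fix n :: nat
    have "g ^ n * \<bar>itc v M n s\<bar> \<le> g ^ n * n1 v"
      using itc_bound[OF assms(1)] assms(2) by (intro mult_left_mono) auto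
    thus "norm (g ^ n * itc v M n s) \<le> n1 v * g ^ n" using assms(2) by (simp add: abs_mult mult.commute)
  qed
  show "summable (\<lambda>n. n1 v * g ^ n)" using assms by (intro summable_mult summable_geometric) simp
qed

lemma csol_eq:
  assumes "rowbd M 1" "0 \<le> g" "g < 1"
  shows "csol g v M s = v s + g * colmul M (csol g v M) s"
proof -
  let ?f = "\<lambda>n. g ^ n * itc v M n s"
  have sf: "summable ?f" by (rule itc_summable[OF assms])
  have "(\<Sum>n. ?f (Suc n)) = suminf ?f - ?f 0" by (rule suminf_split_head[OF sf])
  hence "csol g v M s = v s + (\<Sum>n. ?f (Suc n))" unfolding csol_def by simp
  also have "(\<Sum>n. ?f (Suc n)) = (\<Sum>n. g * (\<Sum>s'\<in>UNIV. M s s' * (g ^ n * itc v M n s')))"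
    by (simp add: colmul_def sum_distrib_left mult_ac)
  also have "\<dots> = g * (\<Sum>n. \<Sum>s'\<in>UNIV. M s s' * (g ^ n * itc v M n s'))"
    by (rule suminf_mult) (intro summable_sum summable_mult itc_summable[OF assms])
  also have "(\<Sum>n. \<Sum>s'\<in>UNIV. M s s' * (g ^ n * itc v M n s')) = (\<Sum>s'\<in>UNIV. \<Sum>n. M s s' * (g ^ n * itc v M n s'))"
    by (rule suminf_sum) (intro summable_mult itc_summable[OF assms])
  also have "\<dots> = (\<Sum>s'\<in>UNIV. M s s' * csol g v M s')"
    unfolding csol_def by (intro sum.cong refl) (rule suminf_mult, rule itc_summable[OF assms])
  finally show ?thesis unfolding colmul_def by simp
qed

lemma dual_identity:
  assumes "\<And>s'. Y s' = x s' + g * rowmul Y M s'"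
    and "\<And>s. V s = w s + g * colmul M V s"
  shows "(\<Sum>s\<in>UNIV. Y s * w s) = (\<Sum>s\<in>UNIV. x s * V s)"
proof -
  have ws: "\<And>s. w s = V s - g * colmul M V s" using assms(2) by (metis add_diff_cancel_right')
  have xs: "\<And>s. x s = Y s - g * rowmul Y M s" using assms(1) by (metis add_diff_cancel_right')
  have "(\<Sum>s\<in>UNIV. Y s * w s) = (\<Sum>s\<in>UNIV. Y s * V s) - g * (\<Sum>s\<in>UNIV. Y s * colmul M V s)"
    unfolding ws by (simp add: algebra_simps sum_subtractf sum_distrib_left)
  also have "(\<Sum>s\<in>UNIV. Y s * colmul M V s) = (\<Sum>s'\<in>UNIV. rowmul Y M s' * V s')"
    unfolding colmul_def rowmul_def
    by (simp add: sum_distrib_left sum_distrib_right mult_ac) (rule sum.swap)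
  also have "(\<Sum>s\<in>UNIV. x s * V s) = (\<Sum>s\<in>UNIV. Y s * V s) - g * (\<Sum>s'\<in>UNIV. rowmul Y M s' * V s')"
    unfolding xs by (simp add: algebra_simps sum_subtractf sum_distrib_left)
  ultimately show ?thesis by simp
qed


lemma fo_limit:
  fixes F :: "'v::real_normed_vector \<Rightarrow> real"
  assumes d: "(F has_derivative F') (at x)"
    and y: "(y \<longlongrightarrow> x) (at_right 0)"
    and b: "eventually (\<lambda>t. norm (y t - x) \<le> B * t) (at_right 0)"
  shows "((\<lambda>t. (F (y t) - F x - F' (y t - x)) / t) \<longlongrightarrow> 0) (at_right (0::real))"
proof -
  define G where "G z = (F z - F x - F' (z - x)) /\<^sub>R norm (z - x)" for z
  have "(G \<longlongrightarrow> 0) (at x)" using has_derivative_at_within[of F F' x UNIV] d unfolding G_def by simp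
  moreover have G0: "G x = 0" unfolding G_def by simp
  ultimately have "isCont G x" unfolding isCont_def by simp
  hence GT: "((\<lambda>t. G (y t)) \<longlongrightarrow> 0) (at_right 0)" using isCont_tendsto_compose[OF _ y] G0 by metis
  have lin: "linear F'" using d by (rule has_derivative_linear)
  have eq: "F z - F x - F' (z - x) = norm (z - x) * G z" for z
  proof (cases "z = x")
    case True then show ?thesis using linear_0[OF lin] by simp
  next
    case False then show ?thesis unfolding G_def by simp
  qed
  show ?thesis
  proof (rule Lim_null_comparison)
    show "eventually (\<lambda>t. norm ((F (y t) - F x - F' (y t - x)) / t) \<le> B * \<bar>G (y t)\<bar>) (at_right 0)"
      using b eventually_at_right_less[of "0::real"]
    proof eventually_elim
      case (elim t)
      have "norm ((F (y t) - F x - F' (y t - x)) / t) = norm (y t - x) * \<bar>G (y t)\<bar> / t"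
        unfolding eq using elim by (simp add: abs_mult)
      also have "\<dots> \<le> B * t * \<bar>G (y t)\<bar> / t"
        using elim by (intro divide_right_mono mult_right_mono) auto
      also have "\<dots> = B * \<bar>G (y t)\<bar>" using elim by simp
      finally show ?case .
    qed
    show "((\<lambda>t. B * \<bar>G (y t)\<bar>) \<longlongrightarrow> 0) (at_right 0)"
      using tendsto_mult_right_zero[OF tendsto_rabs_zero[OF GT], of B] by simp
  qed
qed

lemma concave_tangent:
  fixes F :: "'v::real_normed_vector \<Rightarrow> real"
  assumes d: "(F has_derivative F') (at x)" and c: "concave_on S F" and xy: "x \<in> S" "y \<in> S"
  shows "F y - F x \<le> F' (y - x)"
proof -
  let ?z = "\<lambda>t::real. x + t *\<^sub>R (y - x)"
  have lin: "linear F'" using d by (rule has_derivative_linear)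
  have lim: "((\<lambda>t. (F (?z t) - F x - F' (?z t - x)) / t) \<longlongrightarrow> 0) (at_right 0)"
  proof (rule fo_limit[OF d, where B = "norm (y - x)"])
    show "(?z \<longlongrightarrow> x) (at_right 0)"
    proof -
      have "((\<lambda>t::real. x + t *\<^sub>R (y - x)) \<longlongrightarrow> x + 0 *\<^sub>R (y - x)) (at_right 0)"
        by (intro tendsto_intros)
      thus ?thesis by simp
    qed
    show "eventually (\<lambda>t. norm (?z t - x) \<le> norm (y - x) * t) (at_right 0)"
      using eventually_at_right_less[of "0::real"] by eventually_elim (simp add: mult.commute)
  qed
  have ev: "eventually (\<lambda>t. F y - F x - F' (y - x) \<le> (F (?z t) - F x - F' (?z t - x)) / t) (at_right 0)"
    unfolding eventually_at_right[of "0::real" 1, OF zero_less_one]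
  proof (intro exI[of _ 1] conjI allI impI)
    show "(0::real) < 1" by simp
    fix t :: real assume t: "0 < t" "t < 1"
    have zt: "?z t = (1 - t) *\<^sub>R x + t *\<^sub>R y" by (simp add: algebra_simps)
    have "(1 - t) * F x + t * F y \<le> F (?z t)"
      unfolding zt using concave_onD[OF c, of t x y] t xy by simp
    moreover have "F' (?z t - x) = t * F' (y - x)" using linear_scale[OF lin] by simp
    ultimately have "t * (F y - F x - F' (y - x)) \<le> F (?z t) - F x - F' (?z t - x)"
      by (simp add: algebra_simps)
    thus "F y - F x - F' (y - x) \<le> (F (?z t) - F x - F' (?z t - x)) / t"
      using t by (simp add: field_simps)
  qed
  have "F y - F x - F' (y - x) \<le> 0"
    by (rule tendsto_lowerbound[OF lim ev]) simp
  thus ?thesis by simp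
qed



locale gumg =
  fixes A :: "'i::finite \<Rightarrow> 'a::finite set"
    and P :: "'s::finite \<Rightarrow> ('i \<Rightarrow> 'a) \<Rightarrow> 's \<Rightarrow> real"
    and \<mu> :: "'s \<Rightarrow> real"
    and \<gamma> :: real
    and F :: "'i \<Rightarrow> ((real ^ ('i \<times> 's \<times> 'a)) \<times> (real ^ ('i \<times> 's \<times> 'a))) \<Rightarrow> real"
  assumes A_ne: "\<forall>i. A i \<noteq> {}"
    and P_kernel: "\<forall>s. \<forall>a\<in>joint_actions A. (\<forall>s'. 0 \<le> P s a s') \<and> (\<Sum>s'\<in>UNIV. P s a s') = 1"
    and mu_dist: "(\<forall>s. 0 \<le> \<mu> s) \<and> (\<Sum>s\<in>UNIV. \<mu> s) = 1"
    and gamma0: "0 < \<gamma>" and gamma1: "\<gamma> < 1"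
    and F_diff: "\<forall>i. \<forall>l\<in>lam_set A. \<forall>\<pi>\<in>joint_policies A. F i differentiable (at (l, minus_vec \<pi> i))"
    and A1: "\<forall>i. \<forall>\<pi>\<in>joint_policies A. concave_on (lam_set A) (\<lambda>l. F i (l, minus_vec \<pi> i))"
    and A2: "\<forall>\<pi>\<in>joint_policies A. \<forall>s. 0 < occ_state A P \<gamma> \<mu> \<pi> s"
begin

definition Mp :: "('i \<Rightarrow> 's \<Rightarrow> 'a \<Rightarrow> real) \<Rightarrow> 's \<Rightarrow> 's \<Rightarrow> real" where
  "Mp \<pi> s s' = (\<Sum>b\<in>joint_actions A. joint_prob \<pi> s b * P s b s')"

definition eP :: "('i \<Rightarrow> 's \<Rightarrow> 'a \<Rightarrow> real) \<Rightarrow> 'i \<Rightarrow> 's \<Rightarrow> 'a \<Rightarrow> 's \<Rightarrow> real" where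
  "eP \<pi> i s a s' = (\<Sum>b\<in>{b\<in>joint_actions A. b i = a}. (\<Prod>j\<in>UNIV-{i}. \<pi> j s (b j)) * P s b s')"

lemma sd_itr: "state_dist A P \<rho> \<pi> n = itr \<rho> (Mp \<pi>) n"
proof (induction n)
  case 0 then show ?case by simp
next
  case (Suc n)
  show ?case
    by (rule ext) (simp add: Suc rowmul_def Mp_def sum_distrib_left mult.assoc)
qed

lemma occ_state_rsol: "occ_state A P \<gamma> \<mu> \<pi> s = (1 - \<gamma>) * rsol \<gamma> \<mu> (Mp \<pi>) s"
  unfolding occ_state_def rsol_def sd_itr by simp

lemma occ_agent_rsol:
  assumes "rowbd (Mp \<pi>) K" "0 \<le> K" "\<gamma> * K < 1"
  shows "occ_agent A P \<gamma> \<mu> \<pi> j s a = (1 - \<gamma>) * rsol \<gamma> \<mu> (Mp \<pi>) s * \<pi> j s a"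
proof -
  have "summable (\<lambda>n. \<gamma> ^ n * itr \<mu> (Mp \<pi>) n s)"
    by (rule itr_summable[OF assms(1,2)]) (use gamma0 assms(3) in auto)
  hence "(\<Sum>n. \<gamma> ^ n * itr \<mu> (Mp \<pi>) n s) * \<pi> j s a = (\<Sum>n. \<gamma> ^ n * itr \<mu> (Mp \<pi>) n s * \<pi> j s a)"
    by (rule suminf_mult2)
  thus ?thesis unfolding occ_agent_def rsol_def sd_itr by (simp add: mult.assoc)
qed

lemma occ_vec_eq:
  assumes "rowbd (Mp \<pi>) K" "0 \<le> K" "\<gamma> * K < 1"
  shows "occ_vec A P \<gamma> \<mu> \<pi> = (\<chi> x. case x of (j, s, a) \<Rightarrow> (1 - \<gamma>) * rsol \<gamma> \<mu> (Mp \<pi>) s * \<pi> j s a)"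
  unfolding occ_vec_def by (simp add: vec_eq_iff occ_agent_rsol[OF assms] split: prod.splits)

lemma valid_policy:
  assumes "\<pi> \<in> joint_policies A"
  shows "\<And>s a. a \<in> A j \<Longrightarrow> 0 \<le> \<pi> j s a" "\<And>s a. a \<notin> A j \<Longrightarrow> \<pi> j s a = 0"
    "\<And>s. sum (\<pi> j s) (A j) = 1"
  using assms unfolding joint_policies_def policy_set_def by auto

lemma sum_UNIV_A:
  assumes "\<pi> \<in> joint_policies A"
  shows "(\<Sum>a\<in>UNIV. f a * \<pi> j s a) = (\<Sum>a\<in>A j. f a * \<pi> j s a)"
  by (rule sum.mono_neutral_right) (use valid_policy(2)[OF assms] in auto)

lemma jp_sum:
  assumes "\<pi> \<in> joint_policies A"
  shows "(\<Sum>b\<in>joint_actions A. joint_prob \<pi> s b) = 1"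
proof -
  have "(\<Prod>i\<in>UNIV. \<Sum>a\<in>A i. \<pi> i s a) = (\<Sum>b\<in>PiE UNIV A. \<Prod>i\<in>UNIV. \<pi> i s (b i))"
    by (rule prod_sum_PiE) auto
  moreover have "(\<Prod>i\<in>UNIV. \<Sum>a\<in>A i. \<pi> i s a) = 1"
    using valid_policy(3)[OF assms] by simp
  ultimately show ?thesis unfolding joint_actions_def joint_prob_def by simp
qed

lemma jp_nonneg:
  assumes "\<pi> \<in> joint_policies A" "b \<in> joint_actions A"
  shows "0 \<le> joint_prob \<pi> s b"
  unfolding joint_prob_def
  using assms(2) valid_policy(1)[OF assms(1)] unfolding joint_actions_def
  by (intro prod_nonneg) (auto simp: PiE_iff)

lemma Mp_nonneg:
  assumes "\<pi> \<in> joint_policies A"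
  shows "0 \<le> Mp \<pi> s s'"
  unfolding Mp_def using jp_nonneg[OF assms] P_kernel
  by (intro sum_nonneg mult_nonneg_nonneg) auto

lemma Mp_sum:
  assumes "\<pi> \<in> joint_policies A"
  shows "(\<Sum>s'\<in>UNIV. Mp \<pi> s s') = 1"
proof -
  have "(\<Sum>s'\<in>UNIV. Mp \<pi> s s') = (\<Sum>b\<in>joint_actions A. joint_prob \<pi> s b * (\<Sum>s'\<in>UNIV. P s b s'))"
    unfolding Mp_def by (subst sum.swap) (simp add: sum_distrib_left)
  also have "\<dots> = (\<Sum>b\<in>joint_actions A. joint_prob \<pi> s b)"
    using P_kernel by (intro sum.cong) auto
  finally show ?thesis using jp_sum[OF assms] by simp
qed

lemma rowbd_valid:
  assumes "\<pi> \<in> joint_policies A"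
  shows "rowbd (Mp \<pi>) 1"
  unfolding rowbd_def using Mp_nonneg[OF assms] Mp_sum[OF assms] by simp

lemma Mp_upd: "Mp (\<pi>(i := p)) s s' = (\<Sum>a\<in>A i. p s a * eP \<pi> i s a s')"
proof -
  have jp: "joint_prob (\<pi>(i := p)) s b = p s (b i) * (\<Prod>j\<in>UNIV-{i}. \<pi> j s (b j))" for b
    unfolding joint_prob_def by (subst prod.remove[of UNIV i]) (auto intro!: prod.cong)
  have fin: "finite (joint_actions A)" unfolding joint_actions_def by (simp add: finite_PiE)
  have img: "(\<lambda>b. b i) ` joint_actions A \<subseteq> A i" unfolding joint_actions_def by (auto simp: PiE_iff)
  have "Mp (\<pi>(i := p)) s s' = (\<Sum>b\<in>joint_actions A. p s (b i) * ((\<Prod>j\<in>UNIV-{i}. \<pi> j s (b j)) * P s b s'))"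
    unfolding Mp_def jp by (simp add: mult.assoc)
  also have "\<dots> = (\<Sum>a\<in>A i. \<Sum>b\<in>{b\<in>joint_actions A. b i = a}. p s (b i) * ((\<Prod>j\<in>UNIV-{i}. \<pi> j s (b j)) * P s b s'))"
    by (rule sum.group[OF fin _ img, symmetric]) simp
  also have "\<dots> = (\<Sum>a\<in>A i. p s a * eP \<pi> i s a s')"
    unfolding eP_def by (intro sum.cong refl) (auto simp: sum_distrib_left)
  finally show ?thesis .
qed

lemma eP_upd: "eP (\<pi>(i := p)) i = eP \<pi> i"
  unfolding eP_def by (intro ext sum.cong refl arg_cong2[where f="(*)"] prod.cong) auto

lemma Mp_self: "Mp \<pi> s s' = (\<Sum>a\<in>A i. \<pi> i s a * eP \<pi> i s a s')"
  using Mp_upd[of \<pi> i "\<pi> i"] by simp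

lemma Mp_upd_diff: "Mp (\<pi>(i := p)) s s' - Mp \<pi> s s' = (\<Sum>a\<in>A i. (p s a - \<pi> i s a) * eP \<pi> i s a s')"
  unfolding Mp_upd Mp_self[of \<pi> s s' i] by (simp add: sum_subtractf left_diff_distrib)

lemma valid_upd:
  assumes "\<pi> \<in> joint_policies A" "p \<in> policy_set A i"
  shows "\<pi>(i := p) \<in> joint_policies A"
  using assms unfolding joint_policies_def by auto

lemma rsol_nonneg:
  assumes "\<pi> \<in> joint_policies A"
  shows "0 \<le> rsol \<gamma> \<mu> (Mp \<pi>) s"
proof -
  have "0 \<le> itr \<mu> (Mp \<pi>) n s" for n s
    by (induction n arbitrary: s) (use mu_dist Mp_nonneg[OF assms] in \<open>auto simp: rowmul_def intro!: sum_nonneg\<close>)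
  thus ?thesis unfolding rsol_def using gamma0
    by (intro suminf_nonneg itr_summable[OF rowbd_valid[OF assms]]) (use gamma1 in auto)
qed

lemma rsol_sum:
  assumes "\<pi> \<in> joint_policies A"
  shows "(\<Sum>s\<in>UNIV. rsol \<gamma> \<mu> (Mp \<pi>) s) = 1 / (1 - \<gamma>)"
proof -
  let ?S = "rsol \<gamma> \<mu> (Mp \<pi>)"
  have "(\<Sum>s'\<in>UNIV. ?S s') = (\<Sum>s'\<in>UNIV. \<mu> s' + \<gamma> * rowmul ?S (Mp \<pi>) s')"
    using rsol_eq[OF rowbd_valid[OF assms], of \<gamma> \<mu>] gamma0 gamma1 by (intro sum.cong) auto
  also have "\<dots> = 1 + \<gamma> * (\<Sum>s'\<in>UNIV. rowmul ?S (Mp \<pi>) s')"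
    using mu_dist by (simp add: sum.distrib sum_distrib_left)
  also have "(\<Sum>s'\<in>UNIV. rowmul ?S (Mp \<pi>) s') = (\<Sum>s\<in>UNIV. ?S s * (\<Sum>s'\<in>UNIV. Mp \<pi> s s'))"
    unfolding rowmul_def by (subst sum.swap) (simp add: sum_distrib_left)
  also have "\<dots> = (\<Sum>s\<in>UNIV. ?S s)" using Mp_sum[OF assms] by simp
  finally have "(1 - \<gamma>) * (\<Sum>s\<in>UNIV. ?S s) = 1" by (simp add: algebra_simps)
  thus ?thesis using gamma1 by (simp add: field_simps)
qed

lemma occ_vec_valid:
  assumes "\<pi> \<in> joint_policies A"
  shows "occ_vec A P \<gamma> \<mu> \<pi> = (\<chi> x. case x of (j, s, a) \<Rightarrow> (1 - \<gamma>) * rsol \<gamma> \<mu> (Mp \<pi>) s * \<pi> j s a)"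
  by (rule occ_vec_eq[OF rowbd_valid[OF assms]]) (use gamma1 in auto)

lemma occ_in_lam:
  assumes "\<pi> \<in> joint_policies A"
  shows "occ_vec A P \<gamma> \<mu> \<pi> \<in> lam_set A"
proof -
  let ?S = "rsol \<gamma> \<mu> (Mp \<pi>)"
  have "(\<Sum>s\<in>UNIV. \<Sum>a\<in>A j. (1 - \<gamma>) * ?S s * \<pi> j s a) = 1" for j
  proof -
    have "(\<Sum>s\<in>UNIV. \<Sum>a\<in>A j. (1 - \<gamma>) * ?S s * \<pi> j s a) = (\<Sum>s\<in>UNIV. (1 - \<gamma>) * ?S s)"
      using valid_policy(3)[OF assms] by (simp add: sum_distrib_left[symmetric])
    also have "\<dots> = 1" using rsol_sum[OF assms] gamma1 by (simp add: sum_distrib_left[symmetric])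
    finally show ?thesis .
  qed
  thus ?thesis unfolding lam_set_def occ_vec_valid[OF assms]
    using valid_policy(1,2)[OF assms] rsol_nonneg[OF assms] gamma1 by auto
qed


lemma lin_coord:
  fixes l :: "real ^ 'n \<Rightarrow> real"
  assumes "linear l"
  shows "l h = (\<Sum>x\<in>UNIV. h $ x * l (axis x 1))"
proof -
  have "l h = l (\<Sum>x\<in>UNIV. h $ x *\<^sub>R axis x 1)"
    using basis_expansion[of h] by (simp add: scalar_mult_eq_scaleR)
  also have "\<dots> = (\<Sum>x\<in>UNIV. h $ x * l (axis x 1))"
    by (simp add: linear_sum[OF assms] linear_scale[OF assms] o_def)
  finally show ?thesis .
qed

lemma sum3: "(\<Sum>x\<in>(UNIV :: ('i \<times> 's \<times> 'a) set). f x) = (\<Sum>j\<in>UNIV. \<Sum>s\<in>UNIV. \<Sum>a\<in>UNIV. f (j, s, a))"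
  by (simp add: sum.cartesian_product UNIV_Times_UNIV[symmetric] del: UNIV_Times_UNIV)

lemma lin_fst:
  fixes D :: "('x::real_normed_vector \<times> 'y::real_normed_vector) \<Rightarrow> real"
  assumes "(G has_derivative D) net"
  shows "linear (\<lambda>h. D (h, 0))"
proof -
  have bl: "bounded_linear D" using assms by (rule has_derivative_bounded_linear)
  show ?thesis
  proof (rule linearI)
    fix x y :: 'x show "D (x + y, 0) = D (x, 0) + D (y, 0)"
      using linear_add[OF bounded_linear.linear[OF bl], of "(x, 0)" "(y, 0)"] by simp
  next
    fix c :: real and x :: 'x show "D (c *\<^sub>R x, 0) = c *\<^sub>R D (x, 0)"
      using linear_scale[OF bounded_linear.linear[OF bl], of c "(x, 0)"] by simp
  qed
qed

end

context gumg begin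

definition Fd :: "('i \<Rightarrow> 's \<Rightarrow> 'a \<Rightarrow> real) \<Rightarrow> 'i \<Rightarrow> ((real ^ ('i \<times> 's \<times> 'a)) \<times> (real ^ ('i \<times> 's \<times> 'a))) \<Rightarrow> real" where
  "Fd \<pi> i = (SOME D. (F i has_derivative D) (at (occ_vec A P \<gamma> \<mu> \<pi>, minus_vec \<pi> i)))"

lemma Fd_deriv:
  assumes "\<pi> \<in> joint_policies A"
  shows "(F i has_derivative Fd \<pi> i) (at (occ_vec A P \<gamma> \<mu> \<pi>, minus_vec \<pi> i))"
proof -
  have "F i differentiable (at (occ_vec A P \<gamma> \<mu> \<pi>, minus_vec \<pi> i))"
    using F_diff occ_in_lam[OF assms] assms by blast
  thus ?thesis unfolding Fd_def differentiable_def by (rule someI_ex)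
qed

definition gr :: "('i \<Rightarrow> 's \<Rightarrow> 'a \<Rightarrow> real) \<Rightarrow> 'i \<Rightarrow> ('i \<times> 's \<times> 'a) \<Rightarrow> real" where
  "gr \<pi> i x = Fd \<pi> i (axis x 1, 0)"

definition S :: "('i \<Rightarrow> 's \<Rightarrow> 'a \<Rightarrow> real) \<Rightarrow> 's \<Rightarrow> real" where
  "S \<pi> = rsol \<gamma> \<mu> (Mp \<pi>)"
definition w :: "('i \<Rightarrow> 's \<Rightarrow> 'a \<Rightarrow> real) \<Rightarrow> 'i \<Rightarrow> 's \<Rightarrow> real" where
  "w \<pi> i s = (\<Sum>j\<in>UNIV. \<Sum>a\<in>UNIV. gr \<pi> i (j, s, a) * \<pi> j s a)"
definition V :: "('i \<Rightarrow> 's \<Rightarrow> 'a \<Rightarrow> real) \<Rightarrow> 'i \<Rightarrow> 's \<Rightarrow> real" where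
  "V \<pi> i = csol \<gamma> (w \<pi> i) (Mp \<pi>)"
definition Q :: "('i \<Rightarrow> 's \<Rightarrow> 'a \<Rightarrow> real) \<Rightarrow> 'i \<Rightarrow> 's \<Rightarrow> 'a \<Rightarrow> real" where
  "Q \<pi> i s a = gr \<pi> i (i, s, a) + \<gamma> * (\<Sum>s'\<in>UNIV. eP \<pi> i s a s' * V \<pi> i s')"
definition Y :: "('i \<Rightarrow> 's \<Rightarrow> 'a \<Rightarrow> real) \<Rightarrow> 'i \<Rightarrow> ('s \<Rightarrow> 'a \<Rightarrow> real) \<Rightarrow> 's \<Rightarrow> real" where
  "Y \<pi> i p s = (\<Sum>a\<in>A i. (p s a - \<pi> i s a) * Q \<pi> i s a)"

lemma L_coord:
  assumes "\<pi> \<in> joint_policies A"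
  shows "Fd \<pi> i (h, 0) = (\<Sum>x\<in>UNIV. h $ x * gr \<pi> i x)"
  unfolding gr_def by (rule lin_coord[OF lin_fst[OF Fd_deriv[OF assms]]])

lemma L_occ:
  assumes "\<pi> \<in> joint_policies A" "\<pi>' \<in> joint_policies A"
  shows "Fd \<pi> i (occ_vec A P \<gamma> \<mu> \<pi>', 0) =
     (1 - \<gamma>) * (\<Sum>s\<in>UNIV. S \<pi>' s * (\<Sum>j\<in>UNIV. \<Sum>a\<in>UNIV. gr \<pi> i (j, s, a) * \<pi>' j s a))"
  unfolding L_coord[OF assms(1)] occ_vec_valid[OF assms(2)] sum3 S_def
  by (subst sum.swap) (simp add: sum_distrib_left mult_ac)

lemma S_eq:
  assumes "\<pi> \<in> joint_policies A"
  shows "S \<pi> s' = \<mu> s' + \<gamma> * rowmul (S \<pi>) (Mp \<pi>) s'"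
  unfolding S_def by (rule rsol_eq[OF rowbd_valid[OF assms]]) (use gamma0 gamma1 in auto)

lemma V_eq:
  assumes "\<pi> \<in> joint_policies A"
  shows "V \<pi> i s = w \<pi> i s + \<gamma> * colmul (Mp \<pi>) (V \<pi> i) s"
  unfolding V_def by (rule csol_eq[OF rowbd_valid[OF assms]]) (use gamma0 gamma1 in auto)

lemma occ_state_S: "occ_state A P \<gamma> \<mu> \<pi> s = (1 - \<gamma>) * S \<pi> s"
  unfolding occ_state_rsol S_def ..

lemma PD:
  assumes "\<pi> \<in> joint_policies A" "p \<in> policy_set A i"
  shows "Fd \<pi> i (occ_vec A P \<gamma> \<mu> (\<pi>(i := p)), 0) - Fd \<pi> i (occ_vec A P \<gamma> \<mu> \<pi>, 0)
       = (\<Sum>s\<in>UNIV. occ_state A P \<gamma> \<mu> (\<pi>(i := p)) s * Y \<pi> i p s)"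
proof -
  define \<pi>' where "\<pi>' = \<pi>(i := p)"
  have v': "\<pi>' \<in> joint_policies A" unfolding \<pi>'_def by (rule valid_upd[OF assms])
  define w' where "w' s = (\<Sum>j\<in>UNIV. \<Sum>a\<in>UNIV. gr \<pi> i (j, s, a) * \<pi>' j s a)" for s
  have pz: "a \<notin> A i \<Longrightarrow> p s a = 0" for s a using assms(2) unfolding policy_set_def by auto
  have ww: "w' s - w \<pi> i s = (\<Sum>a\<in>A i. gr \<pi> i (i, s, a) * (p s a - \<pi> i s a))" for s
  proof -
    have "w' s - w \<pi> i s = (\<Sum>j\<in>UNIV. \<Sum>a\<in>UNIV. gr \<pi> i (j, s, a) * (\<pi>' j s a - \<pi> j s a))"
      unfolding w'_def w_def by (simp add: sum_subtractf right_diff_distrib)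
    also have "\<dots> = (\<Sum>a\<in>UNIV. gr \<pi> i (i, s, a) * (p s a - \<pi> i s a))"
      by (subst sum.remove[of UNIV i]) (auto simp: \<pi>'_def)
    also have "\<dots> = (\<Sum>a\<in>A i. gr \<pi> i (i, s, a) * (p s a - \<pi> i s a))"
      by (rule sum.mono_neutral_right) (auto simp: pz valid_policy(2)[OF assms(1)])
    finally show ?thesis .
  qed
  let ?M = "Mp \<pi>" and ?M' = "Mp \<pi>'" and ?V = "V \<pi> i"
  have I1: "(\<Sum>s\<in>UNIV. S \<pi> s * w \<pi> i s) = (\<Sum>s\<in>UNIV. \<mu> s * ?V s)"
    by (rule dual_identity[OF S_eq[OF assms(1)] V_eq[OF assms(1)]])
  have I2: "(\<Sum>s\<in>UNIV. S \<pi>' s * (?V s - \<gamma> * colmul ?M' ?V s)) = (\<Sum>s\<in>UNIV. \<mu> s * ?V s)"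
    by (rule dual_identity[OF S_eq[OF v']]) simp
  have MV: "colmul ?M' ?V s - colmul ?M ?V s = (\<Sum>a\<in>A i. (p s a - \<pi> i s a) * (\<Sum>s'\<in>UNIV. eP \<pi> i s a s' * ?V s'))" for s
  proof -
    have "colmul ?M' ?V s - colmul ?M ?V s = (\<Sum>s'\<in>UNIV. (?M' s s' - ?M s s') * ?V s')"
      unfolding colmul_def by (simp add: sum_subtractf left_diff_distrib)
    also have "\<dots> = (\<Sum>s'\<in>UNIV. \<Sum>a\<in>A i. (p s a - \<pi> i s a) * eP \<pi> i s a s' * ?V s')"
      unfolding \<pi>'_def Mp_upd_diff by (simp add: sum_distrib_right)
    also have "\<dots> = (\<Sum>a\<in>A i. (p s a - \<pi> i s a) * (\<Sum>s'\<in>UNIV. eP \<pi> i s a s' * ?V s'))"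
      by (subst sum.swap) (simp add: sum_distrib_left mult_ac)
    finally show ?thesis .
  qed
  have br: "w' s - ?V s + \<gamma> * colmul ?M' ?V s = Y \<pi> i p s" for s
  proof -
    have "w' s - ?V s + \<gamma> * colmul ?M' ?V s = (w' s - w \<pi> i s) + \<gamma> * (colmul ?M' ?V s - colmul ?M ?V s)"
      using V_eq[OF assms(1), of i s] by (simp add: algebra_simps)
    also have "\<dots> = Y \<pi> i p s"
      unfolding ww MV Y_def Q_def
      by (simp only: sum_distrib_left[of \<gamma>] sum.distrib[symmetric]) (rule sum.cong, simp_all add: algebra_simps sum_distrib_left)
    finally show ?thesis .
  qed
  have "Fd \<pi> i (occ_vec A P \<gamma> \<mu> \<pi>', 0) - Fd \<pi> i (occ_vec A P \<gamma> \<mu> \<pi>, 0)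
      = (1 - \<gamma>) * ((\<Sum>s\<in>UNIV. S \<pi>' s * w' s) - (\<Sum>s\<in>UNIV. S \<pi> s * w \<pi> i s))"
    unfolding L_occ[OF assms(1) v'] L_occ[OF assms(1) assms(1)] w'_def w_def by (simp add: algebra_simps)
  also have "(\<Sum>s\<in>UNIV. S \<pi>' s * w' s) - (\<Sum>s\<in>UNIV. S \<pi> s * w \<pi> i s)
      = (\<Sum>s\<in>UNIV. S \<pi>' s * (w' s - ?V s + \<gamma> * colmul ?M' ?V s))"
    unfolding I1 I2[symmetric] by (simp add: algebra_simps sum_subtractf sum.distrib)
  finally have X: "Fd \<pi> i (occ_vec A P \<gamma> \<mu> \<pi>', 0) - Fd \<pi> i (occ_vec A P \<gamma> \<mu> \<pi>, 0) =
     (1 - \<gamma>) * (\<Sum>s\<in>UNIV. S \<pi>' s * (w' s - ?V s + \<gamma> * colmul ?M' ?V s))" .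
  show ?thesis unfolding \<pi>'_def[symmetric] occ_state_S using X unfolding br
    by (simp add: sum_distrib_left mult_ac)
qed


lemma minus_vec_upd: "minus_vec (\<pi>(i := p)) i = minus_vec \<pi> i"
  unfolding minus_vec_def by (simp add: vec_eq_iff split: prod.splits)

lemma sum_if_delta: fixes X :: "'z::finite \<Rightarrow> real" shows "(\<Sum>s\<in>UNIV. c * (X s * (if s = s0 then e else 0))) = c * (X s0 * (e::real))"
proof -
  have eq: "(\<lambda>s. c * (X s * (if s = s0 then e else 0))) = (\<lambda>s. if s = s0 then c * (X s0 * e) else 0)" by auto
  show ?thesis by (subst eq) simp
qed

lemma sum_if_delta2: fixes X :: "'z::finite \<Rightarrow> real" shows "(\<Sum>s\<in>UNIV. d * (c * (X s * (if s = s0 then e else 0)))) = d * (c * (X s0 * (e::real)))"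
  using sum_if_delta[of "d * c" X s0 e] by (simp add: mult.assoc)

lemma rowmul_pert:
  "rowmul (\<lambda>s. X s + k * Z s) (\<lambda>s s'. M s s' + t * (if s = s0 then e s' else 0)) s'
   = rowmul X M s' + k * rowmul Z M s' + t * (X s0 + k * Z s0) * e s'"
proof -
  have "rowmul (\<lambda>s. X s + k * Z s) (\<lambda>s s'. M s s' + t * (if s = s0 then e s' else 0)) s'
      = (\<Sum>s\<in>UNIV. X s * M s s') + k * (\<Sum>s\<in>UNIV. Z s * M s s')
        + (\<Sum>s\<in>UNIV. if s = s0 then t * (X s0 + k * Z s0) * e s' else 0)"
    unfolding rowmul_def by (simp add: algebra_simps sum.distrib sum_distrib_left sum_if_delta sum_if_delta2)
  thus ?thesis unfolding rowmul_def by (simp add: algebra_simps sum_if_delta sum_if_delta2)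
qed

lemma L_gen:
  assumes "\<pi> \<in> joint_policies A"
  shows "Fd \<pi> i (\<chi> x. case x of (j, s, a) \<Rightarrow> (1 - \<gamma>) * X s * \<pi> j s a, 0) =
     (1 - \<gamma>) * (\<Sum>s\<in>UNIV. X s * w \<pi> i s)"
  unfolding L_coord[OF assms(1)] sum3 w_def
  by (subst sum.swap) (simp add: sum_distrib_left mult_ac)

lemma grad_formula:
  assumes vp: "\<pi> \<in> joint_policies A" and a0: "a0 \<in> A i"
  shows "pseudo_grad A P \<gamma> \<mu> F \<pi> i s0 a0 = occ_state A P \<gamma> \<mu> \<pi> s0 * Q \<pi> i s0 a0"
proof -
  define pt where "pt t = (\<pi> i)(s0 := (\<pi> i s0)(a0 := \<pi> i s0 a0 + t))" for t
  define M where "M = Mp \<pi>"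
  define e0 where "e0 = eP \<pi> i s0 a0"
  define C where "C = n1 e0"
  define R where "R = rsol \<gamma> e0 M"
  define S0 where "S0 = S \<pi>"
  define \<delta> where "\<delta> = (1 - \<gamma>) / (\<gamma> * (C + \<bar>R s0\<bar> + 1))"
  define k where "k t = \<gamma> * t * S0 s0 / (1 - \<gamma> * t * R s0)" for t
  have C0: "0 \<le> C" unfolding C_def by (rule n1_nonneg)
  have \<delta>pos: "0 < \<delta>" unfolding \<delta>_def using gamma0 gamma1 C0
    by (intro divide_pos_pos mult_pos_pos) auto
  have D: "\<gamma> * (C + \<bar>R s0\<bar> + 1) > 0" using gamma0 C0 by (intro mult_pos_pos) auto
  have "\<gamma> * \<delta> * (C + \<bar>R s0\<bar> + 1) = \<delta> * (\<gamma> * (C + \<bar>R s0\<bar> + 1))" by (simp add: mult_ac)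
  also have "\<dots> = 1 - \<gamma>" unfolding \<delta>_def using D gamma0 C0 by auto
  finally have \<delta>eq: "\<gamma> * \<delta> * (C + \<bar>R s0\<bar> + 1) = 1 - \<gamma>" .
  have small: "\<gamma> * \<bar>t\<bar> * (C + \<bar>R s0\<bar>) < 1 - \<gamma>" if "\<bar>t\<bar> < \<delta>" for t
  proof -
    have "\<bar>t\<bar> * (C + \<bar>R s0\<bar>) \<le> \<delta> * (C + \<bar>R s0\<bar>)"
      using that C0 by (intro mult_right_mono) auto
    also have "\<dots> < \<delta> * (C + \<bar>R s0\<bar> + 1)" using \<delta>pos by simp
    finally have "\<gamma> * (\<bar>t\<bar> * (C + \<bar>R s0\<bar>)) < \<gamma> * (\<delta> * (C + \<bar>R s0\<bar> + 1))"
      using gamma0 by (intro mult_strict_left_mono) auto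
    thus ?thesis using \<delta>eq by (simp add: mult_ac)
  qed
  have gK: "\<gamma> * (1 + \<bar>t\<bar> * C) < 1" if "\<bar>t\<bar> < \<delta>" for t
  proof -
    have "\<gamma> * \<bar>t\<bar> * C \<le> \<gamma> * \<bar>t\<bar> * (C + \<bar>R s0\<bar>)" using gamma0 by (intro mult_left_mono) auto
    thus ?thesis using small[OF that] by (simp add: algebra_simps)
  qed
  have den: "\<gamma> * t * R s0 < 1" if "\<bar>t\<bar> < \<delta>" for t
  proof -
    have "\<gamma> * t * R s0 \<le> \<gamma> * \<bar>t\<bar> * \<bar>R s0\<bar>" using gamma0
      by (metis abs_ge_self abs_mult abs_of_pos)
    also have "\<dots> \<le> \<gamma> * \<bar>t\<bar> * (C + \<bar>R s0\<bar>)" using gamma0 C0 by (intro mult_left_mono) auto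
    finally show ?thesis using small[OF that] gamma0 by linarith
  qed
  have dif: "pt t s a - \<pi> i s a = (if s = s0 \<and> a = a0 then t else 0)" for t s a
    by (simp add: pt_def)
  have Mt: "Mp (\<pi>(i := pt t)) s s' = M s s' + t * (if s = s0 then e0 s' else 0)" for t s s'
  proof -
    have "Mp (\<pi>(i := pt t)) s s' - Mp \<pi> s s' = (\<Sum>a\<in>A i. (pt t s a - \<pi> i s a) * eP \<pi> i s a s')"
      by (rule Mp_upd_diff)
    also have "\<dots> = (\<Sum>a\<in>A i. if a = a0 then (if s = s0 then t * e0 s' else 0) else 0)"
      unfolding dif e0_def by (intro sum.cong) auto
    also have "\<dots> = (if s = s0 then t * e0 s' else 0)" using a0 by simp
    finally show ?thesis unfolding M_def by (cases "s = s0") (auto simp: algebra_simps)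
  qed
  have Mt': "Mp (\<pi>(i := pt t)) = (\<lambda>s s'. M s s' + t * (if s = s0 then e0 s' else 0))" for t
    using Mt by (intro ext) auto
  have Kb: "rowbd (Mp (\<pi>(i := pt t))) (1 + \<bar>t\<bar> * C)" for t
    unfolding rowbd_def
  proof
    fix s
    have "(\<Sum>s'\<in>UNIV. \<bar>Mp (\<pi>(i := pt t)) s s'\<bar>) \<le> (\<Sum>s'\<in>UNIV. \<bar>M s s'\<bar> + \<bar>t\<bar> * \<bar>if s = s0 then e0 s' else 0\<bar>)"
      unfolding Mt by (intro sum_mono) (metis abs_mult abs_triangle_ineq)
    also have "\<dots> = (\<Sum>s'\<in>UNIV. \<bar>M s s'\<bar>) + \<bar>t\<bar> * (\<Sum>s'\<in>UNIV. \<bar>if s = s0 then e0 s' else 0\<bar>)"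
      by (simp add: sum.distrib sum_distrib_left)
    finally have 1: "(\<Sum>s'\<in>UNIV. \<bar>Mp (\<pi>(i := pt t)) s s'\<bar>) \<le> (\<Sum>s'\<in>UNIV. \<bar>M s s'\<bar>) + \<bar>t\<bar> * (\<Sum>s'\<in>UNIV. \<bar>if s = s0 then e0 s' else 0\<bar>)" .
    have 2: "(\<Sum>s'\<in>UNIV. \<bar>if s = s0 then e0 s' else 0\<bar>) \<le> C"
      unfolding C_def n1_def by (cases "s = s0") (auto intro: sum_nonneg)
    have 3: "(\<Sum>s'\<in>UNIV. \<bar>M s s'\<bar>) \<le> 1" using rowbd_valid[OF vp] unfolding rowbd_def M_def by auto
    have "\<bar>t\<bar> * (\<Sum>s'\<in>UNIV. \<bar>if s = s0 then e0 s' else 0\<bar>) \<le> \<bar>t\<bar> * C"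
      using 2 by (intro mult_left_mono) auto
    thus "(\<Sum>s'\<in>UNIV. \<bar>Mp (\<pi>(i := pt t)) s s'\<bar>) \<le> 1 + \<bar>t\<bar> * C" using 1 3 by linarith
  qed
  have Req: "R s' = e0 s' + \<gamma> * rowmul R M s'" for s'
    unfolding R_def M_def by (rule rsol_eq[OF rowbd_valid[OF vp]]) (use gamma0 gamma1 in auto)
  have S0eq: "S0 s' = \<mu> s' + \<gamma> * rowmul S0 M s'" for s'
    unfolding S0_def M_def by (rule S_eq[OF vp])
  have solt: "rsol \<gamma> \<mu> (Mp (\<pi>(i := pt t))) = (\<lambda>s. S0 s + k t * R s)" if tt: "\<bar>t\<bar> < \<delta>" for t
  proof (rule rsol_unique[OF Kb, symmetric])
    show "0 \<le> 1 + \<bar>t\<bar> * C" using C0 by simp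
    show "0 \<le> \<gamma>" using gamma0 by simp
    show "\<gamma> * (1 + \<bar>t\<bar> * C) < 1" by (rule gK[OF tt])
    have kk: "k t * (1 - \<gamma> * t * R s0) = \<gamma> * t * S0 s0"
      unfolding k_def using den[OF tt] by simp
    fix s'
    have "\<mu> s' + \<gamma> * rowmul (\<lambda>s. S0 s + k t * R s) (Mp (\<pi>(i := pt t))) s'
        = (\<mu> s' + \<gamma> * rowmul S0 M s') + k t * (\<gamma> * rowmul R M s') + e0 s' * (\<gamma> * t * S0 s0 + \<gamma> * t * k t * R s0)"
      unfolding Mt' rowmul_pert by (simp add: algebra_simps)
    also have "\<dots> = S0 s' + k t * (R s' - e0 s') + e0 s' * (k t)"
      using S0eq[of s'] Req[of s'] kk by (simp add: algebra_simps)
    finally show "S0 s' + k t * R s' = \<mu> s' + \<gamma> * rowmul (\<lambda>s. S0 s + k t * R s) (Mp (\<pi>(i := pt t))) s'"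
      by (simp add: algebra_simps)
  qed
  define x0 where "x0 = (i, s0, a0)"
  define c2 :: "real ^ ('i \<times> 's \<times> 'a)" where "c2 = (\<chi> x. case x of (j, s, a) \<Rightarrow> (1 - \<gamma>) * R s * \<pi> j s a)"
  define c3 :: "real ^ ('i \<times> 's \<times> 'a)" where "c3 = ((1 - \<gamma>) * S0 s0) *\<^sub>R axis x0 1"
  define c4 :: "real ^ ('i \<times> 's \<times> 'a)" where "c4 = ((1 - \<gamma>) * R s0) *\<^sub>R axis x0 1"
  define \<Phi> where "\<Phi> = (\<lambda>t. occ_vec A P \<gamma> \<mu> \<pi> + k t *\<^sub>R c2 + t *\<^sub>R c3 + (t * k t) *\<^sub>R c4)"
  have occ_t: "occ_vec A P \<gamma> \<mu> (\<pi>(i := pt t)) = \<Phi> t" if tt: "\<bar>t\<bar> < \<delta>" for t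
  proof -
    have "occ_vec A P \<gamma> \<mu> (\<pi>(i := pt t)) = (\<chi> x. case x of (j, s, a) \<Rightarrow> (1 - \<gamma>) * rsol \<gamma> \<mu> (Mp (\<pi>(i := pt t))) s * (\<pi>(i := pt t)) j s a)"
      by (rule occ_vec_eq[OF Kb]) (use C0 gK[OF tt] in auto)
    also have "\<dots> = \<Phi> t"
    proof (rule vec_eq_iff[THEN iffD2], rule allI)
      fix x :: "'i \<times> 's \<times> 'a"
      obtain j s a where x: "x = (j, s, a)" by (cases x)
      show "(\<chi> x. case x of (j, s, a) \<Rightarrow> (1 - \<gamma>) * rsol \<gamma> \<mu> (Mp (\<pi>(i := pt t))) s * (\<pi>(i := pt t)) j s a) $ x = \<Phi> t $ x"
        unfolding x solt[OF tt] \<Phi>_def occ_vec_valid[OF vp] c2_def c3_def c4_def x0_def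
        by (cases "j = i"; cases "s = s0"; cases "a = a0") (simp_all add: axis_def S0_def S_def pt_def algebra_simps)
    qed
    finally show ?thesis .
  qed
  have k0: "k 0 = 0" unfolding k_def by simp
  have kd: "(k has_real_derivative \<gamma> * S0 s0) (at 0)"
  proof -
    have "((\<lambda>t. \<gamma> * t * S0 s0 / (1 - \<gamma> * t * R s0)) has_real_derivative \<gamma> * S0 s0) (at 0)"
      by (auto intro!: derivative_eq_intros)
    moreover have "k = (\<lambda>t. \<gamma> * t * S0 s0 / (1 - \<gamma> * t * R s0))" by (rule ext) (simp add: k_def)
    ultimately show ?thesis by simp
  qed
  have tkd: "((\<lambda>t. t * k t) has_real_derivative 0) (at 0)"
    using DERIV_mult[OF DERIV_ident kd] k0 by simp
  define \<Phi>' where "\<Phi>' = (\<gamma> * S0 s0) *\<^sub>R c2 + c3"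
  have \<Phi>d: "(\<Phi> has_vector_derivative \<Phi>') (at 0)"
  proof -
    have h2: "((\<lambda>t. k t *\<^sub>R c2) has_vector_derivative (\<gamma> * S0 s0) *\<^sub>R c2) (at 0)"
      using has_vector_derivative_scaleR[OF kd has_vector_derivative_const[of c2]] by simp
    have h3: "((\<lambda>t. t *\<^sub>R c3) has_vector_derivative c3) (at 0)"
      using has_vector_derivative_scaleR[OF DERIV_ident has_vector_derivative_const[of c3]] by simp
    have h4: "((\<lambda>t. (t * k t) *\<^sub>R c4) has_vector_derivative 0) (at 0)"
      using has_vector_derivative_scaleR[OF tkd has_vector_derivative_const[of c4]] k0 by simp
    have "(\<Phi> has_vector_derivative (0 + (\<gamma> * S0 s0) *\<^sub>R c2 + c3 + 0)) (at 0)"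
      unfolding \<Phi>_def
      by (intro has_vector_derivative_add h2 h3 h4 has_vector_derivative_const)
    thus ?thesis unfolding \<Phi>'_def by simp
  qed
  have \<Phi>0: "\<Phi> 0 = occ_vec A P \<gamma> \<mu> \<pi>" unfolding \<Phi>_def k0 by simp
  have Pd: "((\<lambda>t. (\<Phi> t, minus_vec \<pi> i)) has_derivative (\<lambda>h. (h *\<^sub>R \<Phi>', 0))) (at 0)"
    by (rule has_derivative_Pair[OF \<Phi>d[unfolded has_vector_derivative_def] has_derivative_const])
  have comp: "((\<lambda>t. F i (\<Phi> t, minus_vec \<pi> i)) has_derivative (\<lambda>h. Fd \<pi> i (h *\<^sub>R \<Phi>', 0))) (at 0)"
    by (rule has_derivative_compose[OF Pd]) (simp add: \<Phi>0 Fd_deriv[OF vp])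
  have linF: "linear (\<lambda>h. Fd \<pi> i (h, 0))" by (rule lin_fst[OF Fd_deriv[OF vp]])
  have "(\<lambda>h. Fd \<pi> i (h *\<^sub>R \<Phi>', 0)) = (*) (Fd \<pi> i (\<Phi>', 0))"
    using linear_scale[OF linF] by (auto simp: fun_eq_iff mult.commute)
  hence fd: "((\<lambda>t. F i (\<Phi> t, minus_vec \<pi> i)) has_field_derivative Fd \<pi> i (\<Phi>', 0)) (at 0)"
    using comp unfolding has_field_derivative_def by simp
  have "((\<lambda>t. utility A P \<gamma> \<mu> F i (\<pi>(i := pt t))) has_field_derivative Fd \<pi> i (\<Phi>', 0)) (at 0)"
  proof (rule has_field_derivative_transform_within_open[OF fd, of "ball 0 \<delta>"])
    show "open (ball 0 \<delta>)" by simp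
    show "(0::real) \<in> ball 0 \<delta>" using \<delta>pos by simp
    fix t :: real assume "t \<in> ball 0 \<delta>"
    hence "\<bar>t\<bar> < \<delta>" by (simp add: dist_real_def)
    thus "F i (\<Phi> t, minus_vec \<pi> i) = utility A P \<gamma> \<mu> F i (\<pi>(i := pt t))"
      unfolding utility_def minus_vec_upd by (simp add: occ_t)
  qed
  hence pg: "pseudo_grad A P \<gamma> \<mu> F \<pi> i s0 a0 = Fd \<pi> i (\<Phi>', 0)"
    unfolding pseudo_grad_def pt_def by (rule DERIV_imp_deriv)
  have "Fd \<pi> i (\<Phi>', 0) = (\<gamma> * S0 s0) * Fd \<pi> i (c2, 0) + Fd \<pi> i (c3, 0)"
    unfolding \<Phi>'_def using linear_add[OF linF] linear_scale[OF linF] by simp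
  also have "Fd \<pi> i (c2, 0) = (1 - \<gamma>) * (\<Sum>s\<in>UNIV. R s * w \<pi> i s)"
    unfolding c2_def by (rule L_gen[OF vp])
  also have "(\<Sum>s\<in>UNIV. R s * w \<pi> i s) = (\<Sum>s\<in>UNIV. e0 s * V \<pi> i s)"
    by (rule dual_identity[OF Req V_eq[OF vp, unfolded M_def[symmetric]]])
  also have "Fd \<pi> i (c3, 0) = ((1 - \<gamma>) * S0 s0) * gr \<pi> i x0"
    unfolding c3_def gr_def using linear_scale[OF linF] by simp
  finally have "Fd \<pi> i (\<Phi>', 0) = (1 - \<gamma>) * S0 s0 * (gr \<pi> i x0 + \<gamma> * (\<Sum>s\<in>UNIV. e0 s * V \<pi> i s))"
    by (simp add: algebra_simps)
  thus ?thesis unfolding pg occ_state_S Q_def S0_def x0_def e0_def by simp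
qed


lemma Fl_deriv:
  assumes vp: "\<pi> \<in> joint_policies A"
  shows "((\<lambda>l. F i (l, minus_vec \<pi> i)) has_derivative (\<lambda>h. Fd \<pi> i (h, 0))) (at (occ_vec A P \<gamma> \<mu> \<pi>))"
proof -
  have "((\<lambda>l. (l, minus_vec \<pi> i)) has_derivative (\<lambda>h. (h, 0))) (at (occ_vec A P \<gamma> \<mu> \<pi>))"
    by (rule has_derivative_Pair[OF has_derivative_ident has_derivative_const])
  thus ?thesis by (rule has_derivative_compose) (simp add: Fd_deriv[OF vp])
qed

lemma tangent_game:
  assumes vp: "\<pi> \<in> joint_policies A" and pp: "p \<in> policy_set A i"
  shows "utility A P \<gamma> \<mu> F i (\<pi>(i := p)) - utility A P \<gamma> \<mu> F i \<pi>
       \<le> Fd \<pi> i (occ_vec A P \<gamma> \<mu> (\<pi>(i := p)), 0) - Fd \<pi> i (occ_vec A P \<gamma> \<mu> \<pi>, 0)"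
proof -
  have v': "\<pi>(i := p) \<in> joint_policies A" by (rule valid_upd[OF vp pp])
  have "F i (occ_vec A P \<gamma> \<mu> (\<pi>(i := p)), minus_vec \<pi> i) - F i (occ_vec A P \<gamma> \<mu> \<pi>, minus_vec \<pi> i)
      \<le> Fd \<pi> i (occ_vec A P \<gamma> \<mu> (\<pi>(i := p)) - occ_vec A P \<gamma> \<mu> \<pi>, 0)"
    by (rule concave_tangent[OF Fl_deriv[OF vp], of "lam_set A"])
       (use A1 vp occ_in_lam[OF vp] occ_in_lam[OF v'] in auto)
  also have "Fd \<pi> i (occ_vec A P \<gamma> \<mu> (\<pi>(i := p)) - occ_vec A P \<gamma> \<mu> \<pi>, 0)
      = Fd \<pi> i (occ_vec A P \<gamma> \<mu> (\<pi>(i := p)), 0) - Fd \<pi> i (occ_vec A P \<gamma> \<mu> \<pi>, 0)"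
    using linear_diff[OF lin_fst[OF Fd_deriv[OF vp]]] by simp
  finally show ?thesis unfolding utility_def minus_vec_upd .
qed

lemma pairing_eq:
  assumes vp: "\<pi> \<in> joint_policies A"
  shows "grad_pairing A P \<gamma> \<mu> F \<pi> \<pi>' = (\<Sum>j\<in>UNIV. \<Sum>s\<in>UNIV. occ_state A P \<gamma> \<mu> \<pi> s * Y \<pi> j (\<pi>' j) s)"
  unfolding grad_pairing_def Y_def
  by (intro sum.cong refl) (simp add: grad_formula[OF vp] sum_distrib_left mult_ac)

lemma pairing_single:
  assumes vp: "\<pi> \<in> joint_policies A"
  shows "grad_pairing A P \<gamma> \<mu> F \<pi> (\<pi>(i := q)) = (\<Sum>s\<in>UNIV. occ_state A P \<gamma> \<mu> \<pi> s * Y \<pi> i q s)"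
  unfolding pairing_eq[OF vp] by (subst sum.remove[of UNIV i]) (auto simp: Y_def)

lemma Y_split: "Y \<pi> i p s = (\<Sum>a\<in>A i. p s a * Q \<pi> i s a) - (\<Sum>a\<in>A i. \<pi> i s a * Q \<pi> i s a)"
  unfolding Y_def by (simp add: sum_subtractf left_diff_distrib)

lemma occ_pos:
  assumes "\<pi> \<in> joint_policies A" shows "0 < occ_state A P \<gamma> \<mu> \<pi> s"
  using A2 assms by auto

lemma bound_b:
  assumes vp: "\<pi> \<in> joint_policies A"
    and H: "\<forall>\<pi>'\<in>joint_policies A. grad_pairing A P \<gamma> \<mu> F \<pi> \<pi>' \<le> \<epsilon>"
    and pp: "p \<in> policy_set A i"
  shows "utility A P \<gamma> \<mu> F i (\<pi>(i := p)) - utility A P \<gamma> \<mu> F i \<pi>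
       \<le> (MAX s\<in>UNIV. occ_state A P \<gamma> \<mu> (\<pi>(i := p)) s / occ_state A P \<gamma> \<mu> \<pi> s) * \<epsilon>"
proof -
  have "\<forall>s. \<exists>a\<in>A i. \<forall>b\<in>A i. Q \<pi> i s b \<le> Q \<pi> i s a"
  proof
    fix s
    have "finite (A i)" by simp
    moreover have "A i \<noteq> {}" using A_ne by auto
    ultimately have "Max (Q \<pi> i s ` A i) \<in> Q \<pi> i s ` A i" by (intro Max_in) auto
    then obtain a where a: "a \<in> A i" "Q \<pi> i s a = Max (Q \<pi> i s ` A i)" by auto
    have "\<forall>b\<in>A i. Q \<pi> i s b \<le> Q \<pi> i s a" unfolding a(2) by (auto intro: Max_ge)
    thus "\<exists>a\<in>A i. \<forall>b\<in>A i. Q \<pi> i s b \<le> Q \<pi> i s a" using a(1) by blast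
  qed
  then obtain am where am: "\<And>s. am s \<in> A i" "\<And>s b. b \<in> A i \<Longrightarrow> Q \<pi> i s b \<le> Q \<pi> i s (am s)"
    by metis
  define q where "q s a = (if a = am s then 1 else 0 :: real)" for s a
  have qp: "q \<in> policy_set A i" unfolding policy_set_def q_def using am(1) by auto
  have Yle: "Y \<pi> i r s \<le> Y \<pi> i q s" if rp: "r \<in> policy_set A i" for r s
  proof -
    have r0: "\<And>a. a \<in> A i \<Longrightarrow> 0 \<le> r s a" and r1: "sum (r s) (A i) = 1"
      using rp unfolding policy_set_def by auto
    have "(\<Sum>a\<in>A i. r s a * Q \<pi> i s a) \<le> (\<Sum>a\<in>A i. r s a * Q \<pi> i s (am s))"
      using r0 am(2) by (intro sum_mono mult_left_mono) auto
    also have "\<dots> = Q \<pi> i s (am s)" using r1 by (simp add: sum_distrib_right[symmetric])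
    also have "\<dots> = (\<Sum>a\<in>A i. q s a * Q \<pi> i s a)"
    proof -
      have eq: "(\<lambda>a. q s a * Q \<pi> i s a) = (\<lambda>a. if a = am s then Q \<pi> i s (am s) else 0)"
        unfolding q_def by auto
      show ?thesis by (subst eq) (simp add: am(1))
    qed
    finally show ?thesis unfolding Y_split by simp
  qed
  have Yq0: "0 \<le> Y \<pi> i q s" for s
  proof -
    have "\<pi> i \<in> policy_set A i" using vp unfolding joint_policies_def by auto
    hence "Y \<pi> i (\<pi> i) s \<le> Y \<pi> i q s" by (rule Yle)
    thus ?thesis by (simp add: Y_def)
  qed
  have v': "\<pi>(i := p) \<in> joint_policies A" by (rule valid_upd[OF vp pp])
  define d' where "d' s = occ_state A P \<gamma> \<mu> (\<pi>(i := p)) s" for s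
  define d where "d s = occ_state A P \<gamma> \<mu> \<pi> s" for s
  define \<rho> where "\<rho> = (MAX s\<in>UNIV. d' s / d s)"
  have dpos: "0 < d s" for s unfolding d_def by (rule occ_pos[OF vp])
  have d'pos: "0 < d' s" for s unfolding d'_def by (rule occ_pos[OF v'])
  have rle: "d' s / d s \<le> \<rho>" for s unfolding \<rho>_def by (rule Max_ge) auto
  have d'le: "d' s \<le> \<rho> * d s" for s using rle[of s] dpos[of s] by (simp add: field_simps)
  have \<rho>0: "0 \<le> \<rho>" using rle[of undefined] d'pos[of undefined] dpos[of undefined] by (smt (verit) divide_pos_pos)
  have "utility A P \<gamma> \<mu> F i (\<pi>(i := p)) - utility A P \<gamma> \<mu> F i \<pi> \<le> (\<Sum>s\<in>UNIV. d' s * Y \<pi> i p s)"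
    using tangent_game[OF vp pp] PD[OF vp pp] unfolding d'_def by simp
  also have "\<dots> \<le> (\<Sum>s\<in>UNIV. d' s * Y \<pi> i q s)"
    using Yle[OF pp] d'pos by (intro sum_mono mult_left_mono) (auto intro: less_imp_le)
  also have "\<dots> \<le> (\<Sum>s\<in>UNIV. \<rho> * d s * Y \<pi> i q s)"
    using d'le Yq0 by (intro sum_mono mult_right_mono) auto
  also have "\<dots> = \<rho> * grad_pairing A P \<gamma> \<mu> F \<pi> (\<pi>(i := q))"
    unfolding pairing_single[OF vp] d_def by (simp add: sum_distrib_left mult_ac)
  also have "\<dots> \<le> \<rho> * \<epsilon>" using H valid_upd[OF vp qp] \<rho>0 by (intro mult_left_mono) auto
  finally show ?thesis unfolding \<rho>_def d_def d'_def .
qed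


lemma valid_abs_le1:
  assumes "\<pi> \<in> joint_policies A" shows "\<bar>\<pi> j s a\<bar> \<le> 1"
proof (cases "a \<in> A j")
  case True
  have "\<pi> j s a \<le> sum (\<pi> j s) (A j)"
    using True valid_policy(1)[OF assms] by (intro member_le_sum) auto
  thus ?thesis using valid_policy(1,3)[OF assms] True by auto
next
  case False thus ?thesis using valid_policy(2)[OF assms] by simp
qed

lemma part_a:
  assumes vp: "\<pi> \<in> joint_policies A" and N: "nash A P \<gamma> \<mu> F \<pi>" and pp: "p \<in> policy_set A i"
  shows "(\<Sum>s\<in>UNIV. occ_state A P \<gamma> \<mu> \<pi> s * Y \<pi> i p s) \<le> 0"
proof -
  define q where "q t = (\<lambda>s a. \<pi> i s a + t * (p s a - \<pi> i s a))" for t :: real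
  have p0: "\<And>s a. a \<in> A i \<Longrightarrow> 0 \<le> p s a" "\<And>s a. a \<notin> A i \<Longrightarrow> p s a = 0" "\<And>s. sum (p s) (A i) = 1"
    using pp unfolding policy_set_def by auto
  have qp: "q t \<in> policy_set A i" if "0 \<le> t" "t \<le> 1" for t
  proof -
    have "0 \<le> \<pi> i s a + t * (p s a - \<pi> i s a)" if "a \<in> A i" for s a
    proof -
      have "\<pi> i s a + t * (p s a - \<pi> i s a) = (1 - t) * \<pi> i s a + t * p s a" by (simp add: algebra_simps)
      also have "0 \<le> \<dots>" using \<open>0 \<le> t\<close> \<open>t \<le> 1\<close> p0(1)[OF that] valid_policy(1)[OF vp that] by simp
      finally show ?thesis .
    qed
    moreover have "sum (q t s) (A i) = 1" for s
      unfolding q_def using p0(3) valid_policy(3)[OF vp]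
      by (simp add: sum.distrib sum_distrib_left[symmetric] sum_subtractf)
    ultimately show ?thesis unfolding policy_set_def q_def using p0(2) valid_policy(2)[OF vp] by auto
  qed
  define \<pi>t where "\<pi>t t = \<pi>(i := q t)" for t
  have vt: "\<pi>t t \<in> joint_policies A" if "0 \<le> t" "t \<le> 1" for t
    unfolding \<pi>t_def by (rule valid_upd[OF vp qp[OF that]])
  define D where "D s' = (\<Sum>s\<in>UNIV. S \<pi> s * (\<Sum>a\<in>A i. (p s a - \<pi> i s a) * eP \<pi> i s a s'))" for s'
  define c where "c = \<gamma> * n1 D / (1 - \<gamma>)"
  have c0: "0 \<le> c" unfolding c_def using gamma0 gamma1 n1_nonneg[of D] by simp
  have Mt: "Mp (\<pi>t t) s s' - Mp \<pi> s s' = t * (\<Sum>a\<in>A i. (p s a - \<pi> i s a) * eP \<pi> i s a s')" for t s s'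
    unfolding \<pi>t_def Mp_upd_diff q_def by (simp add: sum_distrib_left mult_ac)
  have Sdiff: "\<bar>S (\<pi>t t) s - S \<pi> s\<bar> \<le> t * c" if t: "0 \<le> t" "t \<le> 1" for t s
  proof -
    let ?Z = "\<lambda>s. S (\<pi>t t) s - S \<pi> s"
    have Zeq: "?Z s' = (\<lambda>s'. \<gamma> * t * D s') s' + \<gamma> * rowmul ?Z (Mp (\<pi>t t)) s'" for s'
    proof -
      have r: "rowmul (S \<pi>) (Mp (\<pi>t t)) s' - rowmul (S \<pi>) (Mp \<pi>) s' = t * D s'"
      proof -
        have "rowmul (S \<pi>) (Mp (\<pi>t t)) s' - rowmul (S \<pi>) (Mp \<pi>) s' = (\<Sum>s\<in>UNIV. S \<pi> s * (Mp (\<pi>t t) s s' - Mp \<pi> s s'))"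
          unfolding rowmul_def by (simp add: sum_subtractf right_diff_distrib)
        also have "\<dots> = t * D s'" unfolding Mt D_def by (simp add: sum_distrib_left mult_ac)
        finally show ?thesis .
      qed
      have e1: "S (\<pi>t t) s' = \<mu> s' + \<gamma> * rowmul (S (\<pi>t t)) (Mp (\<pi>t t)) s'" by (rule S_eq[OF vt[OF t]])
      have e2: "S \<pi> s' = \<mu> s' + \<gamma> * rowmul (S \<pi>) (Mp \<pi>) s'" by (rule S_eq[OF vp])
      show ?thesis unfolding rowmul_diff using r by (subst e1, subst e2) (simp add: algebra_simps)
    qed
    have "n1 ?Z \<le> n1 (\<lambda>s'. \<gamma> * t * D s') / (1 - \<gamma> * 1)"
      by (rule uniq_bound[OF rowbd_valid[OF vt[OF t]] _ _ _ Zeq]) (use gamma0 gamma1 in auto)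
    also have "n1 (\<lambda>s'. \<gamma> * t * D s') = \<gamma> * t * n1 D"
      using n1_scale[of "\<gamma> * t" D] gamma0 t by simp
    finally have "n1 ?Z \<le> t * c" unfolding c_def by (simp add: field_simps)
    thus ?thesis using abs_le_n1[of ?Z s] by linarith
  qed
  define B where "B = (\<Sum>x\<in>(UNIV :: ('i \<times> 's \<times> 'a) set). case x of (j::'i, s, a) \<Rightarrow> (1 - \<gamma>) * (c + \<bar>S \<pi> s\<bar> * \<bar>p s a - \<pi> i s a\<bar>))"
  have nb: "norm (occ_vec A P \<gamma> \<mu> (\<pi>t t) - occ_vec A P \<gamma> \<mu> \<pi>) \<le> B * t" if t: "0 \<le> t" "t \<le> 1" for t
  proof -
    have comp: "\<bar>(occ_vec A P \<gamma> \<mu> (\<pi>t t) - occ_vec A P \<gamma> \<mu> \<pi>) $ x\<bar>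
        \<le> t * (case x of (j::'i, s, a) \<Rightarrow> (1 - \<gamma>) * (c + \<bar>S \<pi> s\<bar> * \<bar>p s a - \<pi> i s a\<bar>))" for x
    proof -
      obtain j s a where x: "x = (j, s, a)" by (cases x)
      have pd: "\<bar>\<pi>t t j s a - \<pi> j s a\<bar> \<le> t * \<bar>p s a - \<pi> i s a\<bar>"
        unfolding \<pi>t_def q_def using t by (cases "j = i") (auto simp: abs_mult)
      have "\<bar>S (\<pi>t t) s * \<pi>t t j s a - S \<pi> s * \<pi> j s a\<bar>
          = \<bar>(S (\<pi>t t) s - S \<pi> s) * \<pi>t t j s a + S \<pi> s * (\<pi>t t j s a - \<pi> j s a)\<bar>"
        by (simp add: algebra_simps)
      also have "\<dots> \<le> \<bar>S (\<pi>t t) s - S \<pi> s\<bar> * \<bar>\<pi>t t j s a\<bar> + \<bar>S \<pi> s\<bar> * \<bar>\<pi>t t j s a - \<pi> j s a\<bar>"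
        by (metis abs_mult abs_triangle_ineq)
      also have "\<dots> \<le> (t * c) * 1 + \<bar>S \<pi> s\<bar> * (t * \<bar>p s a - \<pi> i s a\<bar>)"
        using Sdiff[OF t, of s] valid_abs_le1[OF vt[OF t], of j s a] pd
        by (intro add_mono mult_mono mult_left_mono) auto
      finally have "\<bar>S (\<pi>t t) s * \<pi>t t j s a - S \<pi> s * \<pi> j s a\<bar> \<le> t * (c + \<bar>S \<pi> s\<bar> * \<bar>p s a - \<pi> i s a\<bar>)"
        by (simp add: algebra_simps)
      hence "(1 - \<gamma>) * \<bar>S (\<pi>t t) s * \<pi>t t j s a - S \<pi> s * \<pi> j s a\<bar> \<le> (1 - \<gamma>) * (t * (c + \<bar>S \<pi> s\<bar> * \<bar>p s a - \<pi> i s a\<bar>))"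
        using gamma1 by (intro mult_left_mono) auto
      moreover have "(occ_vec A P \<gamma> \<mu> (\<pi>t t) - occ_vec A P \<gamma> \<mu> \<pi>) $ x = (1 - \<gamma>) * (S (\<pi>t t) s * \<pi>t t j s a - S \<pi> s * \<pi> j s a)"
        unfolding occ_vec_valid[OF vt[OF t]] occ_vec_valid[OF vp] x S_def by (simp add: algebra_simps)
      ultimately show ?thesis unfolding x using gamma1 by (simp add: abs_mult mult_ac)
    qed
    have "norm (occ_vec A P \<gamma> \<mu> (\<pi>t t) - occ_vec A P \<gamma> \<mu> \<pi>) \<le> (\<Sum>x\<in>UNIV. \<bar>(occ_vec A P \<gamma> \<mu> (\<pi>t t) - occ_vec A P \<gamma> \<mu> \<pi>) $ x\<bar>)"
      by (rule norm_le_l1_cart)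
    also have "\<dots> \<le> (\<Sum>x\<in>UNIV. t * (case x of (j::'i, s, a) \<Rightarrow> (1 - \<gamma>) * (c + \<bar>S \<pi> s\<bar> * \<bar>p s a - \<pi> i s a\<bar>)))"
      by (rule sum_mono) (rule comp)
    also have "\<dots> = B * t" unfolding B_def by (simp add: sum_distrib_left mult.commute)
    finally show ?thesis .
  qed
  define y where "y t = (occ_vec A P \<gamma> \<mu> (\<pi>t t), minus_vec \<pi> i)" for t
  define x where "x = (occ_vec A P \<gamma> \<mu> \<pi>, minus_vec \<pi> i)"
  have ev01: "eventually (\<lambda>t. 0 < t \<and> t < (1::real)) (at_right 0)"
    unfolding eventually_at_right[of "0::real" 1, OF zero_less_one] by (intro exI[of _ 1]) auto
  have ynb: "eventually (\<lambda>t. norm (y t - x) \<le> B * t) (at_right 0)"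
    using ev01 by eventually_elim (use nb in \<open>auto simp: y_def x_def\<close>)
  have ytend: "(y \<longlongrightarrow> x) (at_right 0)"
  proof -
    have "((\<lambda>t. y t - x) \<longlongrightarrow> 0) (at_right 0)"
    proof (rule Lim_null_comparison[OF ynb])
      show "((\<lambda>t. B * t) \<longlongrightarrow> 0) (at_right 0)"
        using tendsto_mult_right_zero[OF tendsto_ident_at[of "0::real" "{0<..}"], of B] by simp
    qed
    thus ?thesis by (rule LIM_zero_cancel)
  qed
  have lim1: "((\<lambda>t. (F i (y t) - F i x - Fd \<pi> i (y t - x)) / t) \<longlongrightarrow> 0) (at_right 0)"
    by (rule fo_limit[OF Fd_deriv[OF vp, of i, folded x_def] ytend ynb])
  have Stend: "((\<lambda>t. S (\<pi>t t) s) \<longlongrightarrow> S \<pi> s) (at_right 0)" for s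
  proof -
    have "((\<lambda>t. S (\<pi>t t) s - S \<pi> s) \<longlongrightarrow> 0) (at_right 0)"
    proof (rule Lim_null_comparison)
      show "eventually (\<lambda>t. norm (S (\<pi>t t) s - S \<pi> s) \<le> t * c) (at_right 0)"
        using ev01 by eventually_elim (use Sdiff in auto)
      show "((\<lambda>t. t * c) \<longlongrightarrow> 0) (at_right 0)"
        using tendsto_mult_left_zero[OF tendsto_ident_at[of "0::real" "{0<..}"], of c] by simp
    qed
    thus ?thesis by (rule LIM_zero_cancel)
  qed
  have Slim: "((\<lambda>t. - (\<Sum>s\<in>UNIV. occ_state A P \<gamma> \<mu> (\<pi>t t) s * Y \<pi> i p s)) \<longlongrightarrow> - (\<Sum>s\<in>UNIV. occ_state A P \<gamma> \<mu> \<pi> s * Y \<pi> i p s)) (at_right 0)"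
    unfolding occ_state_S by (intro tendsto_intros Stend)
  have ev: "eventually (\<lambda>t. (F i (y t) - F i x - Fd \<pi> i (y t - x)) / t \<le> - (\<Sum>s\<in>UNIV. occ_state A P \<gamma> \<mu> (\<pi>t t) s * Y \<pi> i p s)) (at_right 0)"
    using ev01
  proof eventually_elim
    case (elim t)
    hence t: "0 \<le> t" "t \<le> 1" by auto
    have "F i (y t) - F i x = utility A P \<gamma> \<mu> F i (\<pi>(i := q t)) - utility A P \<gamma> \<mu> F i \<pi>"
      unfolding y_def x_def utility_def \<pi>t_def minus_vec_upd ..
    also have "\<dots> \<le> 0" using N qp[OF t] unfolding nash_def approx_nash_def by auto
    finally have u: "F i (y t) - F i x \<le> 0" .
    have "Fd \<pi> i (y t - x) = Fd \<pi> i (occ_vec A P \<gamma> \<mu> (\<pi>t t), 0) - Fd \<pi> i (occ_vec A P \<gamma> \<mu> \<pi>, 0)"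
      unfolding y_def x_def using linear_diff[OF lin_fst[OF Fd_deriv[OF vp]]] by simp
    also have "\<dots> = (\<Sum>s\<in>UNIV. occ_state A P \<gamma> \<mu> (\<pi>t t) s * Y \<pi> i (q t) s)"
      unfolding \<pi>t_def by (rule PD[OF vp qp[OF t]])
    also have "\<dots> = t * (\<Sum>s\<in>UNIV. occ_state A P \<gamma> \<mu> (\<pi>t t) s * Y \<pi> i p s)"
      unfolding Y_def q_def by (simp add: sum_distrib_left mult_ac)
    finally have "F i (y t) - F i x - Fd \<pi> i (y t - x) \<le> t * (- (\<Sum>s\<in>UNIV. occ_state A P \<gamma> \<mu> (\<pi>t t) s * Y \<pi> i p s))"
      using u by simp
    thus ?case using elim by (simp add: divide_le_eq mult.commute)
  qed
  have "0 \<le> - (\<Sum>s\<in>UNIV. occ_state A P \<gamma> \<mu> \<pi> s * Y \<pi> i p s)"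
    by (rule tendsto_le[OF trivial_limit_at_right_real Slim lim1 ev])
  thus ?thesis by simp
qed


definition conv :: "real ^ ('i \<times> 's \<times> 'a) \<Rightarrow> ('i \<Rightarrow> 's \<Rightarrow> 'a \<Rightarrow> real)" where
  "conv x = (\<lambda>j s a. x $ (j, s, a))"
definition vecp :: "('i \<Rightarrow> 's \<Rightarrow> 'a \<Rightarrow> real) \<Rightarrow> real ^ ('i \<times> 's \<times> 'a)" where
  "vecp \<pi> = (\<chi> x. case x of (j, s, a) \<Rightarrow> \<pi> j s a)"
definition KK :: "(real ^ ('i \<times> 's \<times> 'a)) set" where
  "KK = {x. conv x \<in> joint_policies A}"

lemma conv_vecp [simp]: "conv (vecp \<pi>) = \<pi>"
  unfolding conv_def vecp_def by simp

lemma KK_eq: "KK = {x. (\<forall>j s a. a \<in> A j \<longrightarrow> 0 \<le> x $ (j, s, a)) \<and> (\<forall>j s a. a \<notin> A j \<longrightarrow> x $ (j, s, a) = 0)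
    \<and> (\<forall>j s. (\<Sum>a\<in>A j. x $ (j, s, a)) = 1)}"
  unfolding KK_def joint_policies_def policy_set_def conv_def by auto

lemma cont_nth: "continuous_on UNIV (\<lambda>x::real ^ 'n. x $ k)"
  by (rule linear_continuous_on[OF bounded_linear_vec_nth])

lemma open_const: "open {x::'z::topological_space. c}"
  by (cases c) auto

lemma closed_KK: "closed KK"
  unfolding KK_eq
  by (intro closed_Collect_conj closed_Collect_all closed_Collect_imp open_const
        closed_Collect_le closed_Collect_eq continuous_on_const cont_nth continuous_on_sum)

lemma bounded_KK: "bounded KK"
  unfolding bounded_iff
proof (intro exI ballI)
  fix x assume "x \<in> KK"
  hence v: "conv x \<in> joint_policies A" unfolding KK_def by simp
  have "norm x \<le> (\<Sum>k\<in>UNIV. \<bar>x $ k\<bar>)" by (rule norm_le_l1_cart)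
  also have "\<dots> \<le> (\<Sum>k\<in>(UNIV :: ('i \<times> 's \<times> 'a) set). 1)"
  proof (rule sum_mono)
    fix k :: "'i \<times> 's \<times> 'a" obtain j s a where k: "k = (j, s, a)" by (cases k)
    show "\<bar>x $ k\<bar> \<le> 1" using valid_abs_le1[OF v, of j s a] unfolding k conv_def by simp
  qed
  finally show "norm x \<le> real (card (UNIV :: ('i \<times> 's \<times> 'a) set))" by simp
qed

lemma compact_KK: "compact KK"
  using closed_KK bounded_KK by (simp add: compact_eq_bounded_closed)

lemma vecp_KK: "\<pi> \<in> joint_policies A \<Longrightarrow> vecp \<pi> \<in> KK"
  unfolding KK_def by simp

lemma S_diff_bound:
  assumes vp: "\<pi> \<in> joint_policies A" and v': "\<pi>' \<in> joint_policies A"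
  shows "\<bar>S \<pi>' s - S \<pi> s\<bar> \<le> \<gamma> * n1 (\<lambda>s'. \<Sum>s\<in>UNIV. S \<pi> s * (Mp \<pi>' s s' - Mp \<pi> s s')) / (1 - \<gamma>)"
proof -
  let ?Z = "\<lambda>s. S \<pi>' s - S \<pi> s"
  let ?D = "\<lambda>s'. \<Sum>s\<in>UNIV. S \<pi> s * (Mp \<pi>' s s' - Mp \<pi> s s')"
  have Zeq: "?Z s' = (\<lambda>s'. \<gamma> * ?D s') s' + \<gamma> * rowmul ?Z (Mp \<pi>') s'" for s'
  proof -
    have r: "rowmul (S \<pi>) (Mp \<pi>') s' - rowmul (S \<pi>) (Mp \<pi>) s' = ?D s'"
      unfolding rowmul_def by (simp add: sum_subtractf right_diff_distrib)
    have e1: "S \<pi>' s' = \<mu> s' + \<gamma> * rowmul (S \<pi>') (Mp \<pi>') s'" by (rule S_eq[OF v'])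
    have e2: "S \<pi> s' = \<mu> s' + \<gamma> * rowmul (S \<pi>) (Mp \<pi>) s'" by (rule S_eq[OF vp])
    show ?thesis unfolding rowmul_diff using r by (subst e1, subst e2) (simp add: algebra_simps)
  qed
  have "n1 ?Z \<le> n1 (\<lambda>s'. \<gamma> * ?D s') / (1 - \<gamma> * 1)"
    by (rule uniq_bound[OF rowbd_valid[OF v'] _ _ _ Zeq]) (use gamma0 gamma1 in auto)
  also have "n1 (\<lambda>s'. \<gamma> * ?D s') = \<gamma> * n1 ?D" using n1_scale[of \<gamma> ?D] gamma0 by simp
  finally show ?thesis using abs_le_n1[of ?Z s] by simp
qed

lemma S_tend:
  assumes x0: "x0 \<in> KK"
  shows "((\<lambda>y. S (conv y) s) \<longlongrightarrow> S (conv x0) s) (at x0 within KK)"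
proof -
  define g where "g y = \<gamma> * n1 (\<lambda>s'. \<Sum>s\<in>UNIV. S (conv x0) s * (Mp (conv y) s s' - Mp (conv x0) s s')) / (1 - \<gamma>)" for y
  have "((\<lambda>y. S (conv y) s - S (conv x0) s) \<longlongrightarrow> 0) (at x0 within KK)"
  proof (rule Lim_null_comparison)
    show "eventually (\<lambda>y. norm (S (conv y) s - S (conv x0) s) \<le> g y) (at x0 within KK)"
      unfolding eventually_at_filter
      by (rule always_eventually) (use x0 S_diff_bound in \<open>auto simp: g_def KK_def\<close>)
    have "(g \<longlongrightarrow> g x0) (at x0 within KK)"
      unfolding g_def n1_def Mp_def joint_prob_def conv_def
      by (intro tendsto_intros) (use gamma1 in simp)
    thus "(g \<longlongrightarrow> 0) (at x0 within KK)" by (simp add: g_def n1_def)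
  qed
  thus ?thesis by (rule LIM_zero_cancel)
qed

definition occK :: "real ^ ('i \<times> 's \<times> 'a) \<Rightarrow> real ^ ('i \<times> 's \<times> 'a)" where
  "occK y = (\<chi> x. case x of (j, s, a) \<Rightarrow> (1 - \<gamma>) * S (conv y) s * y $ (j, s, a))"

lemma occK_eq: "y \<in> KK \<Longrightarrow> occ_vec A P \<gamma> \<mu> (conv y) = occK y"
  unfolding KK_def occK_def by (simp add: occ_vec_valid S_def conv_def)

lemma occK_tend:
  assumes x0: "x0 \<in> KK"
  shows "(occK \<longlongrightarrow> occK x0) (at x0 within KK)"
proof -
  have "((\<lambda>y. (\<chi> x. (1 - \<gamma>) * S (conv y) (fst (snd x)) * y $ x)) \<longlongrightarrow> (\<chi> x. (1 - \<gamma>) * S (conv x0) (fst (snd x)) * x0 $ x)) (at x0 within KK)"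
    by (intro tendsto_intros S_tend[OF x0] tendsto_vec_nth tendsto_ident_at)
  moreover have "occK = (\<lambda>y. (\<chi> x. (1 - \<gamma>) * S (conv y) (fst (snd x)) * y $ x))"
    unfolding occK_def by (intro ext) (simp add: vec_eq_iff split: prod.splits)
  ultimately show ?thesis by simp
qed


lemma BR_nonempty:
  assumes vp: "\<pi> \<in> joint_policies A"
  shows "best_responses A P \<gamma> \<mu> F i \<pi> \<noteq> {}"
proof -
  define Ki where "Ki = KK \<inter> {y. \<forall>j s a. j \<noteq> i \<longrightarrow> y $ (j, s, a) = \<pi> j s a}"
  have "closed {y::real ^ ('i \<times> 's \<times> 'a). \<forall>j s a. j \<noteq> i \<longrightarrow> y $ (j, s, a) = \<pi> j s a}"
    by (intro closed_Collect_all closed_Collect_imp open_const closed_Collect_eq cont_nth continuous_on_const)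
  hence cK: "compact Ki" unfolding Ki_def by (rule compact_Int_closed[OF compact_KK])
  have neK: "Ki \<noteq> {}" using vecp_KK[OF vp] unfolding Ki_def by (auto simp: vecp_def)
  define f where "f y = F i (occK y, minus_vec \<pi> i)" for y
  have cf: "continuous_on Ki f"
    unfolding continuous_on_def
  proof
    fix x assume xK: "x \<in> Ki"
    hence xKK: "x \<in> KK" unfolding Ki_def by simp
    have "occK x \<in> lam_set A"
      using occ_in_lam[of "conv x"] xKK occK_eq[OF xKK] unfolding KK_def by simp
    hence "F i differentiable (at (occK x, minus_vec \<pi> i))" using F_diff vp by blast
    hence ic: "isCont (F i) (occK x, minus_vec \<pi> i)" by (rule differentiable_imp_continuous_within)
    have "((\<lambda>y. (occK y, minus_vec \<pi> i)) \<longlongrightarrow> (occK x, minus_vec \<pi> i)) (at x within Ki)"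
      by (intro tendsto_Pair tendsto_const tendsto_within_subset[OF occK_tend[OF xKK]]) (auto simp: Ki_def)
    thus "(f \<longlongrightarrow> f x) (at x within Ki)" unfolding f_def by (rule isCont_tendsto_compose[OF ic])
  qed
  obtain x1 where x1: "x1 \<in> Ki" "\<And>y. y \<in> Ki \<Longrightarrow> f y \<le> f x1"
    using continuous_attains_sup[OF cK neK cf] by blast
  define p0 where "p0 = conv x1 i"
  have x1KK: "x1 \<in> KK" using x1(1) unfolding Ki_def by simp
  have cx1: "conv x1 = \<pi>(i := p0)"
    using x1(1) unfolding Ki_def p0_def conv_def by (auto intro!: ext)
  have p0p: "p0 \<in> policy_set A i" using x1KK unfolding KK_def joint_policies_def p0_def by auto
  have uf: "utility A P \<gamma> \<mu> F i (\<pi>(i := p')) = f (vecp (\<pi>(i := p')))" if "p' \<in> policy_set A i" for p' :: "'s \<Rightarrow> 'a \<Rightarrow> real"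
  proof -
    have "vecp (\<pi>(i := p')) \<in> KK" by (rule vecp_KK[OF valid_upd[OF vp that]])
    from occK_eq[OF this] show ?thesis unfolding utility_def f_def minus_vec_upd by simp
  qed
  have "p0 \<in> best_responses A P \<gamma> \<mu> F i \<pi>"
    unfolding best_responses_def
  proof (intro CollectI conjI ballI p0p)
    fix p' :: "'s \<Rightarrow> 'a \<Rightarrow> real" assume pp': "p' \<in> policy_set A i"
    have "vecp (\<pi>(i := p')) \<in> Ki"
      using vecp_KK[OF valid_upd[OF vp pp']] unfolding Ki_def by (auto simp: vecp_def)
    hence "f (vecp (\<pi>(i := p'))) \<le> f x1" by (rule x1(2))
    moreover have "x1 = vecp (\<pi>(i := p0))" using cx1 unfolding vecp_def conv_def
      by (auto simp: vec_eq_iff fun_eq_iff split: prod.splits dest!: fun_cong)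
    ultimately show "utility A P \<gamma> \<mu> F i (\<pi>(i := p')) \<le> utility A P \<gamma> \<mu> F i (\<pi>(i := p0))"
      using uf[OF pp'] uf[OF p0p] by simp
  qed
  thus ?thesis by auto
qed

lemma occ_lower: "\<exists>\<delta>>0. \<forall>\<pi>\<in>joint_policies A. \<forall>s. \<delta> \<le> occ_state A P \<gamma> \<mu> \<pi> s"
proof -
  have "\<forall>s. \<exists>\<delta>>0. \<forall>\<pi>\<in>joint_policies A. \<delta> \<le> occ_state A P \<gamma> \<mu> \<pi> s"
  proof
    fix s
    show "\<exists>\<delta>>0. \<forall>\<pi>\<in>joint_policies A. \<delta> \<le> occ_state A P \<gamma> \<mu> \<pi> s"
    proof (cases "KK = {}")
      case True
      hence "joint_policies A = ({} :: ('i \<Rightarrow> 's \<Rightarrow> 'a \<Rightarrow> real) set)" using vecp_KK by auto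
      thus ?thesis by (intro exI[of _ 1]) auto
    next
      case False
      have "continuous_on KK (\<lambda>y. S (conv y) s)"
        unfolding continuous_on_def using S_tend by blast
      then obtain x1 where x1: "x1 \<in> KK" "\<And>y. y \<in> KK \<Longrightarrow> S (conv x1) s \<le> S (conv y) s"
        using continuous_attains_inf[OF compact_KK False] by blast
      have pos: "0 < occ_state A P \<gamma> \<mu> (conv x1) s" using occ_pos x1(1) unfolding KK_def by simp
      show ?thesis
      proof (intro exI[of _ "occ_state A P \<gamma> \<mu> (conv x1) s"] conjI pos ballI)
        fix \<pi> :: "'i \<Rightarrow> 's \<Rightarrow> 'a \<Rightarrow> real" assume "\<pi> \<in> joint_policies A"
        from x1(2)[OF vecp_KK[OF this]] show "occ_state A P \<gamma> \<mu> (conv x1) s \<le> occ_state A P \<gamma> \<mu> \<pi> s"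
          unfolding occ_state_S using gamma1 by (simp add: mult_left_mono)
      qed
    qed
  qed
  then obtain df where df: "\<And>s. 0 < df s" "\<And>s \<pi>. \<pi> \<in> joint_policies A \<Longrightarrow> df s \<le> occ_state A P \<gamma> \<mu> \<pi> s"
    by metis
  define \<delta> where "\<delta> = Min (range df)"
  have "0 < \<delta>" unfolding \<delta>_def using df(1) by (subst Min_gr_iff) auto
  moreover have "\<delta> \<le> df s" for s unfolding \<delta>_def by (rule Min_le) auto
  ultimately show ?thesis using df(2) by (meson order_trans)
qed

lemma occ_le1:
  assumes vp: "\<pi> \<in> joint_policies A" shows "occ_state A P \<gamma> \<mu> \<pi> s \<le> 1"
proof -
  have "S \<pi> s \<le> (\<Sum>s\<in>UNIV. S \<pi> s)"
    using rsol_nonneg[OF vp] unfolding S_def by (intro member_le_sum) auto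
  hence "(1 - \<gamma>) * S \<pi> s \<le> (1 - \<gamma>) * (\<Sum>s\<in>UNIV. S \<pi> s)" using gamma1 by (intro mult_left_mono) auto
  also have "\<dots> = 1" using rsol_sum[OF vp] gamma1 unfolding S_def by simp
  finally show ?thesis unfolding occ_state_S .
qed

lemma ratio_bounds:
  assumes vp: "\<pi> \<in> joint_policies A" and pp: "p \<in> policy_set A i"
    and \<delta>: "0 < \<delta>" "\<forall>\<pi>\<in>joint_policies A. \<forall>s. \<delta> \<le> occ_state A P \<gamma> \<mu> \<pi> s"
  shows "0 \<le> (MAX s\<in>UNIV. occ_state A P \<gamma> \<mu> (\<pi>(i := p)) s / occ_state A P \<gamma> \<mu> \<pi> s)"
    and "(MAX s\<in>UNIV. occ_state A P \<gamma> \<mu> (\<pi>(i := p)) s / occ_state A P \<gamma> \<mu> \<pi> s) \<le> 1 / \<delta>"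
proof -
  have v': "\<pi>(i := p) \<in> joint_policies A" by (rule valid_upd[OF vp pp])
  have r0: "0 \<le> occ_state A P \<gamma> \<mu> (\<pi>(i := p)) s / occ_state A P \<gamma> \<mu> \<pi> s" for s
    using occ_pos[OF vp, of s] occ_pos[OF v', of s] by simp
  have r1: "occ_state A P \<gamma> \<mu> (\<pi>(i := p)) s / occ_state A P \<gamma> \<mu> \<pi> s \<le> 1 / \<delta>" for s
    using occ_le1[OF v', of s] \<delta> vp occ_pos[OF v', of s]
    by (intro frac_le) auto
  show "0 \<le> (MAX s\<in>UNIV. occ_state A P \<gamma> \<mu> (\<pi>(i := p)) s / occ_state A P \<gamma> \<mu> \<pi> s)"
    using r0[of undefined] by (meson Max_ge UNIV_I finite finite_imageI image_eqI order_trans)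
  show "(MAX s\<in>UNIV. occ_state A P \<gamma> \<mu> (\<pi>(i := p)) s / occ_state A P \<gamma> \<mu> \<pi> s) \<le> 1 / \<delta>"
    using r1 by (subst Max_le_iff) auto
qed


theorem main:
  shows "(\<forall>\<pi>s\<in>joint_policies A.
            nash A P \<gamma> \<mu> F \<pi>s \<longleftrightarrow> (\<forall>\<pi>\<in>joint_policies A. grad_pairing A P \<gamma> \<mu> F \<pi>s \<pi> \<le> 0))
       \<and> (\<forall>\<epsilon>>0. \<forall>\<pi>s\<in>joint_policies A.
            (\<forall>\<pi>\<in>joint_policies A. grad_pairing A P \<gamma> \<mu> F \<pi>s \<pi> \<le> \<epsilon>)
              \<longrightarrow> approx_nash A P \<gamma> \<mu> F (C_G A P \<gamma> \<mu> F * \<epsilon>) \<pi>s)"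
proof (intro conjI ballI allI impI)
  fix \<pi>s :: "'i \<Rightarrow> 's \<Rightarrow> 'a \<Rightarrow> real" assume vp: "\<pi>s \<in> joint_policies A"
  show "nash A P \<gamma> \<mu> F \<pi>s \<longleftrightarrow> (\<forall>\<pi>\<in>joint_policies A. grad_pairing A P \<gamma> \<mu> F \<pi>s \<pi> \<le> 0)"
  proof
    assume N: "nash A P \<gamma> \<mu> F \<pi>s"
    show "\<forall>\<pi>\<in>joint_policies A. grad_pairing A P \<gamma> \<mu> F \<pi>s \<pi> \<le> 0"
    proof
      fix \<pi> :: "'i \<Rightarrow> 's \<Rightarrow> 'a \<Rightarrow> real" assume v: "\<pi> \<in> joint_policies A"
      show "grad_pairing A P \<gamma> \<mu> F \<pi>s \<pi> \<le> 0"
        unfolding pairing_eq[OF vp]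
      proof (rule sum_nonpos)
        fix j
        have "\<pi> j \<in> policy_set A j" using v unfolding joint_policies_def by auto
        thus "(\<Sum>s\<in>UNIV. occ_state A P \<gamma> \<mu> \<pi>s s * Y \<pi>s j (\<pi> j) s) \<le> 0" by (rule part_a[OF vp N])
      qed
    qed
  next
    assume H: "\<forall>\<pi>\<in>joint_policies A. grad_pairing A P \<gamma> \<mu> F \<pi>s \<pi> \<le> 0"
    show "nash A P \<gamma> \<mu> F \<pi>s"
      unfolding nash_def approx_nash_def
      using bound_b[OF vp H] by fastforce
  qed
next
  fix \<epsilon> :: real and \<pi>s :: "'i \<Rightarrow> 's \<Rightarrow> 'a \<Rightarrow> real"
  assume e: "0 < \<epsilon>" and vp: "\<pi>s \<in> joint_policies A"
    and H: "\<forall>\<pi>\<in>joint_policies A. grad_pairing A P \<gamma> \<mu> F \<pi>s \<pi> \<le> \<epsilon>"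
  obtain \<delta> where \<delta>: "0 < \<delta>" "\<forall>\<pi>\<in>joint_policies A. \<forall>s. \<delta> \<le> occ_state A P \<gamma> \<mu> \<pi> s"
    using occ_lower by blast
  define R where "R \<pi> i p = (MAX s\<in>UNIV. occ_state A P \<gamma> \<mu> (\<pi>(i := p)) s / occ_state A P \<gamma> \<mu> \<pi> s)"
    for \<pi> :: "'i \<Rightarrow> 's \<Rightarrow> 'a \<Rightarrow> real" and i p
  define I where "I i \<pi> = (INF p\<in>best_responses A P \<gamma> \<mu> F i \<pi>. R \<pi> i p)" for i \<pi>
  have CG: "C_G A P \<gamma> \<mu> F = (MAX i\<in>UNIV. SUP \<pi>\<in>joint_policies A. I i \<pi>)"
    unfolding C_G_def I_def R_def ..
  have BRp: "p \<in> policy_set A i" if "p \<in> best_responses A P \<gamma> \<mu> F i \<pi>" for p i \<pi>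
    using that unfolding best_responses_def by auto
  have Ibd: "I i \<pi> \<le> 1 / \<delta>" if v: "\<pi> \<in> joint_policies A" for i \<pi>
  proof -
    obtain p0 where p0: "p0 \<in> best_responses A P \<gamma> \<mu> F i \<pi>" using BR_nonempty[OF v] by blast
    have "I i \<pi> \<le> R \<pi> i p0" unfolding I_def
    proof (rule cINF_lower[OF _ p0])
      show "bdd_below ((R \<pi> i) ` best_responses A P \<gamma> \<mu> F i \<pi>)"
        unfolding bdd_below_def R_def using ratio_bounds(1)[OF v BRp \<delta>] by blast
    qed
    also have "\<dots> \<le> 1 / \<delta>" unfolding R_def by (rule ratio_bounds(2)[OF v BRp[OF p0] \<delta>])
    finally show ?thesis .
  qed
  show "approx_nash A P \<gamma> \<mu> F (C_G A P \<gamma> \<mu> F * \<epsilon>) \<pi>s"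
    unfolding approx_nash_def
  proof (intro allI ballI)
    fix i and p :: "'s \<Rightarrow> 'a \<Rightarrow> real" assume pp: "p \<in> policy_set A i"
    let ?d = "utility A P \<gamma> \<mu> F i (\<pi>s(i := p)) - utility A P \<gamma> \<mu> F i \<pi>s"
    have "?d / \<epsilon> \<le> I i \<pi>s"
      unfolding I_def
    proof (rule cINF_greatest)
      show "best_responses A P \<gamma> \<mu> F i \<pi>s \<noteq> {}" by (rule BR_nonempty[OF vp])
      fix p' assume p': "p' \<in> best_responses A P \<gamma> \<mu> F i \<pi>s"
      have "utility A P \<gamma> \<mu> F i (\<pi>s(i := p)) \<le> utility A P \<gamma> \<mu> F i (\<pi>s(i := p'))"
        using p' pp unfolding best_responses_def by auto
      hence "?d \<le> R \<pi>s i p' * \<epsilon>" using bound_b[OF vp H BRp[OF p']] unfolding R_def by linarith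
      thus "?d / \<epsilon> \<le> R \<pi>s i p'" using e by (simp add: divide_le_eq)
    qed
    also have "I i \<pi>s \<le> (SUP \<pi>\<in>joint_policies A. I i \<pi>)"
    proof (rule cSUP_upper[OF vp])
      show "bdd_above (I i ` joint_policies A)" unfolding bdd_above_def using Ibd by blast
    qed
    also have "\<dots> \<le> (MAX i\<in>UNIV. SUP \<pi>\<in>joint_policies A. I i \<pi>)" by (rule Max_ge) auto
    finally have "?d / \<epsilon> \<le> C_G A P \<gamma> \<mu> F" unfolding CG .
    thus "?d \<le> C_G A P \<gamma> \<mu> F * \<epsilon>" using e by (simp add: divide_le_eq)
  qed
qed

end

theorem proposition2:
  fixes A :: "'i::finite \<Rightarrow> 'a::finite set"
    and P :: "'s::finite \<Rightarrow> ('i \<Rightarrow> 'a) \<Rightarrow> 's \<Rightarrow> real"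
    and \<mu> :: "'s \<Rightarrow> real"
    and \<gamma> :: real
    and F :: "'i \<Rightarrow> ((real ^ ('i \<times> 's \<times> 'a)) \<times> (real ^ ('i \<times> 's \<times> 'a))) \<Rightarrow> real"
  assumes A_ne: "\<forall>i. A i \<noteq> {}"
    and P_kernel: "\<forall>s. \<forall>a\<in>joint_actions A. (\<forall>s'. 0 \<le> P s a s') \<and> (\<Sum>s'\<in>UNIV. P s a s') = 1"
    and mu_dist: "(\<forall>s. 0 \<le> \<mu> s) \<and> (\<Sum>s\<in>UNIV. \<mu> s) = 1"
    and gamma: "0 < \<gamma>" "\<gamma> < 1"
    and F_diff: "\<forall>i. \<forall>l\<in>lam_set A. \<forall>\<pi>\<in>joint_policies A. F i differentiable (at (l, minus_vec \<pi> i))"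
    and A1: "\<forall>i. \<forall>\<pi>\<in>joint_policies A. concave_on (lam_set A) (\<lambda>l. F i (l, minus_vec \<pi> i))"
    and A2: "\<forall>\<pi>\<in>joint_policies A. \<forall>s. 0 < occ_state A P \<gamma> \<mu> \<pi> s"
  shows "(\<forall>\<pi>s\<in>joint_policies A.
            nash A P \<gamma> \<mu> F \<pi>s \<longleftrightarrow> (\<forall>\<pi>\<in>joint_policies A. grad_pairing A P \<gamma> \<mu> F \<pi>s \<pi> \<le> 0))
       \<and> (\<forall>\<epsilon>>0. \<forall>\<pi>s\<in>joint_policies A.
            (\<forall>\<pi>\<in>joint_policies A. grad_pairing A P \<gamma> \<mu> F \<pi>s \<pi> \<le> \<epsilon>)
              \<longrightarrow> approx_nash A P \<gamma> \<mu> F (C_G A P \<gamma> \<mu> F * \<epsilon>) \<pi>s)"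
proof -
  interpret gumg A P \<mu> \<gamma> F
    by (rule gumg.intro) (use assms in auto)
  show ?thesis by (rule main)
qed

end
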